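(* Assume the Smoothness Assumption (see context) and let $\{x^k_\tau,y^k_\tau,z^k_\tau\}$ and $G^k_{x,\tau},G^k_{y,\tau}$ be generated by Algorithm 1. Let $C_{\sigma,x}=C_{\sigma,y}=0$ in the finite-sum setting and $C_{\sigma,x}=\sigma_x^2/B$, $C_{\sigma,y}=\sigma_y^2/B$ in the online setting. Then for any $k\ge0$ and $0\le\tau\le T-1$, $$\mathbb E\|G^k_{y,\tau}-\nabla_yF(x^k_\tau,y^k_\tau)\|^2\le\frac{L_y^2}M\sum_{b=0}^{\tau-1}\mathbb E\|x^k_{b+1}-x^k_b\|^2+\frac{L_y^2}M\sum_{b=0}^{\tau-1}\mathbb E\|y^k_{b+1}-y^k_b\|^2+C_{\sigma,y},$$ $$\mathbb E\|G^k_{x,\tau}-\nabla_xF(x^k_\tau,y^k_\tau)\|^2\le\frac{2L_x^2}M\sum_{b=0}^{\tau-1}\mathbb E\|x^k_{b+1}-x^k_b\|^2+\frac{2L_y^2}M\sum_{b=0}^{\tau-1}\mathbb E\|y^k_{b+1}-y^k_b\|^2+C_{\sigma,x}.$$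
   Context: Problem. Let $\mathcal X\subseteq\mathbb R^{d_x}$ and $\mathcal Y\subseteq\mathbb R^{d_y}$ be nonempty closed convex sets, $\mathbb P$ a probability distribution with support $\Xi$, $f:\mathbb R^{d_x}\times\mathbb R^{d_y}\times\Xi\to\mathbb R$, $F(x,y)=\mathbb E_{\xi\sim\mathbb P}[f(x,y;\xi)]$; problem $\min_{x\in\mathcal X}\max_{y\in\mathcal Y}F(x,y)$. Finite-sum setting: $\mathbb P$ is the empirical distribution of $N$ samples; online setting: only i.i.d. samples from $\mathbb P$ are available. Smoothness Assumption: (i) $\mathcal Y$ compact with diameter $D_{\mathcal Y}$; (ii) $\exists\ell>0$: $\mathbb E|f(x_1,y_1;\xi)-f(x_2,y_2;\xi)|\le\ell(\|x_1-x_2\|+\|y_1-y_2\|)$ on $\mathcal X\times\mathcal Y$; (iii) constants $L_x,L_y$ with, for all $x,x_i\in\mathcal X$, $y,y_i\in\mathcal Y$: $\mathbb E\|\nabla_xf(x_1,y;\xi)-\nabla_xf(x_2,y;\xi)\|^2\le L_x^2\|x_1-x_2\|^2$, $\mathbb E\|\nabla_xf(x,y_1;\xi)-\nabla_xf(x,y_2;\xi)\|^2\le L_y^2\|y_1-y_2\|^2$, $\mathbb E\|\nabla_yf(x_1,y_1;\xi)-\nabla_yf(x_2,y_2;\xi)\|^2\le L_y^2(\|x_1-x_2\|^2+\|y_1-y_2\|^2)$; (iv) $F(\cdot,y)$ is $\rho$-weakly convex on $\mathcal X$ for every $y\in\mathcal Y$; (v) $\mathbb E[\nabla f(x,y;\xi)\mid(x,y)]=\nabla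 F(x,y)$, $\mathbb E\|\nabla_xf-\nabla_xF\|^2\le\sigma_x^2$, $\mathbb E\|\nabla_yf-\nabla_yF\|^2\le\sigma_y^2$; (vi) $\max_{y\in\mathcal Y}\min_{x\in\mathcal X}F(x,y)\ge\underline F$ for some $\underline F\in\mathbb R$. Algorithm 1: Input $(x^0_0,y^0_0,z^0_0)$, positive integers $K,T,M,B$, parameters $\alpha_x,\alpha_y,\beta,r>0$. For $k=0,\dots,K-1$, $\tau=0,\dots,T-1$: if $\tau=0$, $G^k_{x,0}=\frac1B\sum_{i=1}^B\nabla_xf(x^k_0,y^k_0;\xi^k_{0,i})$, $G^k_{y,0}=\frac1B\sum_{i=1}^B\nabla_yf(x^k_0,y^k_0;\xi^k_{0,i})$ with $B$ i.i.d. samples from $\mathbb P$ (online) or all $N$ samples with $B=N$ (finite-sum); if $\tau\ge1$, with $M$ fresh i.i.d. samples $\xi^k_{\tau,i}\sim\mathbb P$, $G^k_{x,\tau}=\frac1M\sum_{i=1}^M[\nabla_xf(x^k_\tau,y^k_\tau;\xi^k_{\tau,i})-\nabla_xf(x^k_{\tau-1},y^k_{\tau-1};\xi^k_{\tau,i})]+G^k_{x,\tau-1}$ and $G^k_{y,\tau}$ analogously with $\nabla_y$. Update $x^k_{\tau+1}=\mathrm{proj}_{\mathcal X}(x^k_\tau-\alpha_x[G^k_{x,\tau}+r(x^k_\tau-z^k_\tau)])$, $y^k_{\tau+1}=\mathrm{proj}_{\mathcal Y}(y^k_\tau+\alpha_yG^k_{y,\tau})$, $z^k_{\tau+1}=z^k_\tau+\beta(x^k_{\tau+1}-z^k_\tau)$;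 then $(x^{k+1}_0,y^{k+1}_0,z^{k+1}_0)=(x^k_T,y^k_T,z^k_T)$. Expectations are over all randomness of the algorithm. *)

theory Defs
  imports "HOL-Probability.Probability"
begin

definition Fexp :: "'a measure \<Rightarrow> ('x \<Rightarrow> 'y \<Rightarrow> 'a \<Rightarrow> real) \<Rightarrow> 'x \<Rightarrow> 'y \<Rightarrow> real" where
  "Fexp P f x y = (\<integral>\<xi>. f x y \<xi> \<partial>P)"

definition empirical :: "nat \<Rightarrow> (nat \<Rightarrow> 'a) \<Rightarrow> 'a measure" where
  "empirical N data = measure_pmf (map_pmf data (pmf_of_set {..<N}))"

record ('x, 'y) alg_state =
  sx :: 'x
  sy :: 'y
  sz :: 'x
  sGx :: 'x
  sGy :: 'y

text \<open>Sample used in the anchor (tau = 0) step: in the online setting the i-th fresh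
  i.i.d. sample omega(k,0,i), in the finite-sum setting the i-th data point (with B = N).
  All samples of the run are omega(k,tau,i), indexed by epoch k, inner step tau, and i.\<close>
definition anchor_sample :: "bool \<Rightarrow> (nat \<Rightarrow> 'a) \<Rightarrow> (nat \<times> nat \<times> nat \<Rightarrow> 'a) \<Rightarrow> nat \<Rightarrow> nat \<Rightarrow> 'a" where
  "anchor_sample online data \<omega> k i = (if online then \<omega> (k, 0, i) else data i)"

fun alg :: "('x::euclidean_space \<Rightarrow> 'y::euclidean_space \<Rightarrow> 'a \<Rightarrow> 'x) \<Rightarrow> ('x \<Rightarrow> 'y \<Rightarrow> 'a \<Rightarrow> 'y)
    \<Rightarrow> 'x set \<Rightarrow> 'y set \<Rightarrow> real \<Rightarrow> real \<Rightarrow> real \<Rightarrow> real \<Rightarrow> nat \<Rightarrow> nat \<Rightarrow> nat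
    \<Rightarrow> bool \<Rightarrow> (nat \<Rightarrow> 'a) \<Rightarrow> 'x \<Rightarrow> 'y \<Rightarrow> 'x \<Rightarrow> (nat \<times> nat \<times> nat \<Rightarrow> 'a)
    \<Rightarrow> nat \<Rightarrow> nat \<Rightarrow> ('x, 'y) alg_state" where
  "alg gx gy X Y ax ay \<beta> r T M B online data x0 y0 z0 \<omega> 0 0 =
     \<lparr> sx = x0, sy = y0, sz = z0,
       sGx = (1 / real B) *\<^sub>R (\<Sum>i<B. gx x0 y0 (anchor_sample online data \<omega> 0 i)),
       sGy = (1 / real B) *\<^sub>R (\<Sum>i<B. gy x0 y0 (anchor_sample online data \<omega> 0 i)) \<rparr>"
| "alg gx gy X Y ax ay \<beta> r T M B online data x0 y0 z0 \<omega> (Suc k) 0 =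
     (let s = alg gx gy X Y ax ay \<beta> r T M B online data x0 y0 z0 \<omega> k T in
      \<lparr> sx = sx s, sy = sy s, sz = sz s,
        sGx = (1 / real B) *\<^sub>R (\<Sum>i<B. gx (sx s) (sy s) (anchor_sample online data \<omega> (Suc k) i)),
        sGy = (1 / real B) *\<^sub>R (\<Sum>i<B. gy (sx s) (sy s) (anchor_sample online data \<omega> (Suc k) i)) \<rparr>)"
| "alg gx gy X Y ax ay \<beta> r T M B online data x0 y0 z0 \<omega> k (Suc \<tau>) =
     (let s = alg gx gy X Y ax ay \<beta> r T M B online data x0 y0 z0 \<omega> k \<tau>;
          x = sx s; y = sy s; z = sz s;
          x' = closest_point X (x - ax *\<^sub>R (sGx s + r *\<^sub>R (x - z)));
          y' = closest_point Y (y + ay *\<^sub>R sGy s);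
          z' = z + \<beta> *\<^sub>R (x' - z)
      in \<lparr> sx = x', sy = y', sz = z',
           sGx = (1 / real M) *\<^sub>R (\<Sum>i<M. gx x' y' (\<omega> (k, Suc \<tau>, i)) - gx x y (\<omega> (k, Suc \<tau>, i))) + sGx s,
           sGy = (1 / real M) *\<^sub>R (\<Sum>i<M. gy x' y' (\<omega> (k, Suc \<tau>, i)) - gy x y (\<omega> (k, Suc \<tau>, i))) + sGy s \<rparr>)"

end

theory Submission
  imports Defs
begin


lemma inner_sq_bound:
  fixes w :: "'a \<Rightarrow> 'v::euclidean_space"
  assumes P: "prob_space P" and wm: "w \<in> borel_measurable P" and wi: "integrable P w"
    and w0: "(\<integral>\<xi>. w \<xi> \<partial>P) = 0"
  shows "(\<integral>\<^sup>+\<xi>. ennreal ((norm (c + w \<xi>))\<^sup>2) \<partial>P) \<le> ennreal ((norm c)\<^sup>2) + (\<integral>\<^sup>+\<xi>. ennreal ((norm (w \<xi>))\<^sup>2) \<partial>P)"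
proof (cases "(\<integral>\<^sup>+\<xi>. ennreal ((norm (w \<xi>))\<^sup>2) \<partial>P) = \<infinity>")
  case True then show ?thesis by simp
next
  case False
  interpret prob_space P by fact
  obtain v where v: "(\<integral>\<^sup>+\<xi>. ennreal ((norm (w \<xi>))\<^sup>2) \<partial>P) = ennreal v" "v \<ge> 0"
    using False by (cases "(\<integral>\<^sup>+\<xi>. ennreal ((norm (w \<xi>))\<^sup>2) \<partial>P)") auto
  have i2: "integrable P (\<lambda>\<xi>. (norm (w \<xi>))\<^sup>2)"
    by (rule integrableI_nn_integral_finite[OF _ _ v(1)]) (use wm in auto)
  have iv: "(\<integral>\<xi>. (norm (w \<xi>))\<^sup>2 \<partial>P) = v"
    using nn_integral_eq_integral[OF i2] v by simp
  have eq: "\<And>\<xi>. (norm (c + w \<xi>))\<^sup>2 = (norm c)\<^sup>2 + 2 * (c \<bullet> w \<xi>) + (norm (w \<xi>))\<^sup>2"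
    by (simp add: power2_norm_eq_inner inner_add_left inner_add_right inner_commute)
  have ic: "integrable P (\<lambda>\<xi>. c \<bullet> w \<xi>)" using wi by auto
  have i3: "integrable P (\<lambda>\<xi>. (norm c)\<^sup>2 + 2 * (c \<bullet> w \<xi>) + (norm (w \<xi>))\<^sup>2)"
    using ic i2 by auto
  have IE: "(\<integral>\<xi>. (norm c)\<^sup>2 + 2 * (c \<bullet> w \<xi>) + (norm (w \<xi>))\<^sup>2 \<partial>P) = (norm c)\<^sup>2 + v"
    using ic i2 wi w0 iv by (simp add: prob_space)
  hence "(\<integral>\<^sup>+\<xi>. ennreal ((norm (c + w \<xi>))\<^sup>2) \<partial>P) = ennreal ((norm c)\<^sup>2 + v)"
  proof -
    have "AE \<xi> in P. 0 \<le> (norm c)\<^sup>2 + 2 * (c \<bullet> w \<xi>) + (norm (w \<xi>))\<^sup>2"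
      by (simp add: eq[symmetric])
    from nn_integral_eq_integral[OF i3 this] IE show ?thesis by (simp add: eq)
  qed
  then show ?thesis using v by (simp add: ennreal_plus)
qed

lemma var_bound:
  fixes w :: "'a \<Rightarrow> 'v::euclidean_space"
  assumes P: "prob_space P" and wm: "w \<in> borel_measurable P" and wi: "integrable P w"
  shows "(\<integral>\<^sup>+\<xi>. ennreal ((norm (w \<xi> - (\<integral>\<zeta>. w \<zeta> \<partial>P)))\<^sup>2) \<partial>P) \<le> (\<integral>\<^sup>+\<xi>. ennreal ((norm (w \<xi>))\<^sup>2) \<partial>P)"
proof (cases "(\<integral>\<^sup>+\<xi>. ennreal ((norm (w \<xi>))\<^sup>2) \<partial>P) = \<infinity>")
  case True then show ?thesis by simp
next
  case False
  interpret prob_space P by fact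
  define c where "c = (\<integral>\<zeta>. w \<zeta> \<partial>P)"
  obtain v where v: "(\<integral>\<^sup>+\<xi>. ennreal ((norm (w \<xi>))\<^sup>2) \<partial>P) = ennreal v" "v \<ge> 0"
    using False by (cases "(\<integral>\<^sup>+\<xi>. ennreal ((norm (w \<xi>))\<^sup>2) \<partial>P)") auto
  have i2: "integrable P (\<lambda>\<xi>. (norm (w \<xi>))\<^sup>2)"
    by (rule integrableI_nn_integral_finite[OF _ _ v(1)]) (use wm in auto)
  have iv: "(\<integral>\<xi>. (norm (w \<xi>))\<^sup>2 \<partial>P) = v"
    using nn_integral_eq_integral[OF i2] v by simp
  have eq: "\<And>\<xi>. (norm (w \<xi> - c))\<^sup>2 = (norm c)\<^sup>2 - 2 * (c \<bullet> w \<xi>) + (norm (w \<xi>))\<^sup>2"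
    by (simp add: power2_norm_eq_inner inner_diff_left inner_diff_right inner_commute)
  have ic: "integrable P (\<lambda>\<xi>. c \<bullet> w \<xi>)" using wi by auto
  have i3: "integrable P (\<lambda>\<xi>. (norm c)\<^sup>2 - 2 * (c \<bullet> w \<xi>) + (norm (w \<xi>))\<^sup>2)"
    using ic i2 by auto
  have IE: "(\<integral>\<xi>. (norm c)\<^sup>2 - 2 * (c \<bullet> w \<xi>) + (norm (w \<xi>))\<^sup>2 \<partial>P) = v - (norm c)\<^sup>2"
    using ic i2 wi iv by (simp add: prob_space c_def power2_norm_eq_inner)
  hence "(\<integral>\<^sup>+\<xi>. ennreal ((norm (w \<xi> - c))\<^sup>2) \<partial>P) = ennreal (v - (norm c)\<^sup>2)"
  proof -
    have "AE \<xi> in P. 0 \<le> (norm c)\<^sup>2 - 2 * (c \<bullet> w \<xi>) + (norm (w \<xi>))\<^sup>2"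
      by (simp add: eq[symmetric])
    from nn_integral_eq_integral[OF i3 this] IE show ?thesis by (simp add: eq)
  qed
  then show ?thesis using v by (simp add: c_def ennreal_leI)
qed



lemma key_step:
  fixes U :: "(nat \<times> nat \<times> nat \<Rightarrow> 'a) \<Rightarrow> 'v::euclidean_space"
    and V :: "(nat \<times> nat \<times> nat \<Rightarrow> 'a) \<Rightarrow> 'a \<Rightarrow> 'v"
  assumes P: "prob_space P"
    and Um[measurable]: "U \<in> borel_measurable (PiM UNIV (\<lambda>_. P))"
    and Vm[measurable]: "(\<lambda>(w, \<xi>). V w \<xi>) \<in> borel_measurable (PiM UNIV (\<lambda>_. P) \<Otimes>\<^sub>M P)"
    and Uind: "\<And>w c. U (w(j := c)) = U w"
    and Vind: "\<And>w c. V (w(j := c)) = V w"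
    and Vint: "\<And>w. integrable P (V w)"
    and V0: "\<And>w. (\<integral>\<xi>. V w \<xi> \<partial>P) = 0"
  shows "(\<integral>\<^sup>+w. ennreal ((norm (U w + V w (w j)))\<^sup>2) \<partial>PiM UNIV (\<lambda>_. P))
     \<le> (\<integral>\<^sup>+w. ennreal ((norm (U w))\<^sup>2) \<partial>PiM UNIV (\<lambda>_. P))
       + (\<integral>\<^sup>+w. (\<integral>\<^sup>+\<xi>. ennreal ((norm (V w \<xi>))\<^sup>2) \<partial>P) \<partial>PiM UNIV (\<lambda>_. P))"
proof -
  let ?\<Omega> = "PiM UNIV (\<lambda>_::nat \<times> nat \<times> nat. P)"
  interpret P: prob_space P by fact
  interpret O: prob_space ?\<Omega> by (rule prob_space_PiM) (use P in auto)
  interpret PO: pair_sigma_finite P ?\<Omega> by unfold_locales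
  have D: "distr (P \<Otimes>\<^sub>M ?\<Omega>) ?\<Omega> (\<lambda>(x, X). X(j := x)) = ?\<Omega>"
    using distr_pair_PiM_eq_PiM[of UNIV "\<lambda>_. P" j] P by simp
  have phim: "(\<lambda>(x, X). X(j := x)) \<in> measurable (P \<Otimes>\<^sub>M ?\<Omega>) ?\<Omega>"
  proof -
    have "(\<lambda>p. (snd p)(j := fst p)) \<in> measurable (P \<Otimes>\<^sub>M ?\<Omega>) ?\<Omega>"
      by (rule measurable_fun_upd[where J=UNIV]) auto
    then show ?thesis by (simp add: split_beta')
  qed
  have Vm1: "(\<lambda>w. V w (w j)) \<in> borel_measurable ?\<Omega>"
  proof -
    have "(\<lambda>w. (w, w j)) \<in> measurable ?\<Omega> (?\<Omega> \<Otimes>\<^sub>M P)" by measurable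
    from measurable_comp[OF this Vm] show ?thesis by (simp add: o_def)
  qed
  have Fm: "(\<lambda>w. ennreal ((norm (U w + V w (w j)))\<^sup>2)) \<in> borel_measurable ?\<Omega>"
    using Vm1 by measurable
  have "(\<integral>\<^sup>+w. ennreal ((norm (U w + V w (w j)))\<^sup>2) \<partial>?\<Omega>)
     = (\<integral>\<^sup>+w. ennreal ((norm (U w + V w (w j)))\<^sup>2) \<partial>distr (P \<Otimes>\<^sub>M ?\<Omega>) ?\<Omega> (\<lambda>(x, X). X(j := x)))"
    by (simp add: D)
  also have "\<dots> = (\<integral>\<^sup>+p. ennreal ((norm (U (snd p) + V (snd p) (fst p)))\<^sup>2) \<partial>(P \<Otimes>\<^sub>M ?\<Omega>))"
    by (subst nn_integral_distr[OF phim]) (use Fm in \<open>simp add: D\<close>, auto simp: Uind Vind split_beta intro!: nn_integral_cong)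
  also have "\<dots> = (\<integral>\<^sup>+X. (\<integral>\<^sup>+x. ennreal ((norm (U X + V X x))\<^sup>2) \<partial>P) \<partial>?\<Omega>)"
  proof -
    have m: "(\<lambda>p. ennreal ((norm (U (snd p) + V (snd p) (fst p)))\<^sup>2)) \<in> borel_measurable (P \<Otimes>\<^sub>M ?\<Omega>)"
    proof -
      have "(\<lambda>p. V (snd p) (fst p)) \<in> borel_measurable (P \<Otimes>\<^sub>M ?\<Omega>)"
      proof -
        have "(\<lambda>p. (snd p, fst p)) \<in> measurable (P \<Otimes>\<^sub>M ?\<Omega>) (?\<Omega> \<Otimes>\<^sub>M P)" by measurable
        from measurable_comp[OF this Vm] show ?thesis by (simp add: o_def split_beta)
      qed
      then show ?thesis by measurable
    qed
    show ?thesis using PO.nn_integral_snd[OF m] by simp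
  qed
  also have "\<dots> \<le> (\<integral>\<^sup>+X. ennreal ((norm (U X))\<^sup>2) + (\<integral>\<^sup>+x. ennreal ((norm (V X x))\<^sup>2) \<partial>P) \<partial>?\<Omega>)"
  proof (rule nn_integral_mono)
    fix X assume X: "X \<in> space ?\<Omega>"
    have "V X \<in> borel_measurable P"
    proof -
      have "(\<lambda>\<xi>. (X, \<xi>)) \<in> measurable P (?\<Omega> \<Otimes>\<^sub>M P)" using X by measurable
      from measurable_comp[OF this Vm] show ?thesis by (simp add: o_def)
    qed
    then show "(\<integral>\<^sup>+x. ennreal ((norm (U X + V X x))\<^sup>2) \<partial>P) \<le> ennreal ((norm (U X))\<^sup>2) + (\<integral>\<^sup>+x. ennreal ((norm (V X x))\<^sup>2) \<partial>P)"
      by (rule inner_sq_bound[OF P _ Vint V0])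
  qed
  also have "\<dots> = (\<integral>\<^sup>+X. ennreal ((norm (U X))\<^sup>2) \<partial>?\<Omega>) + (\<integral>\<^sup>+X. (\<integral>\<^sup>+x. ennreal ((norm (V X x))\<^sup>2) \<partial>P) \<partial>?\<Omega>)"
  proof (rule nn_integral_add)
    show "(\<lambda>X. \<integral>\<^sup>+x. ennreal ((norm (V X x))\<^sup>2) \<partial>P) \<in> borel_measurable ?\<Omega>"
      by (rule P.borel_measurable_nn_integral) (use Vm in measurable)
  qed auto
  finally show ?thesis .
qed



lemma key_sum:
  fixes E0 :: "(nat \<times> nat \<times> nat \<Rightarrow> 'a) \<Rightarrow> 'v::euclidean_space"
    and Wf :: "(nat \<times> nat \<times> nat \<Rightarrow> 'a) \<Rightarrow> 'a \<Rightarrow> 'v"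
  assumes P: "prob_space P"
    and Em[measurable]: "E0 \<in> borel_measurable (PiM UNIV (\<lambda>_. P))"
    and Wm[measurable]: "(\<lambda>(w, \<xi>). Wf w \<xi>) \<in> borel_measurable (PiM UNIV (\<lambda>_. P) \<Otimes>\<^sub>M P)"
    and inj: "inj_on js {..<n}"
    and Eind: "\<And>w c i. i < n \<Longrightarrow> E0 (w(js i := c)) = E0 w"
    and Wind: "\<And>w c i. i < n \<Longrightarrow> Wf (w(js i := c)) = Wf w"
    and Wint: "\<And>w. integrable P (Wf w)"
    and W0: "\<And>w. (\<integral>\<xi>. Wf w \<xi> \<partial>P) = 0"
  shows "(\<integral>\<^sup>+w. ennreal ((norm (E0 w + (\<Sum>i<n. Wf w (w (js i)))))\<^sup>2) \<partial>PiM UNIV (\<lambda>_. P))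
     \<le> (\<integral>\<^sup>+w. ennreal ((norm (E0 w))\<^sup>2) \<partial>PiM UNIV (\<lambda>_. P))
       + of_nat n * (\<integral>\<^sup>+w. (\<integral>\<^sup>+\<xi>. ennreal ((norm (Wf w \<xi>))\<^sup>2) \<partial>P) \<partial>PiM UNIV (\<lambda>_. P))"
  using inj Eind Wind
proof (induction n)
  case 0
  then show ?case by simp
next
  case (Suc m)
  let ?\<Omega> = "PiM UNIV (\<lambda>_::nat \<times> nat \<times> nat. P)"
  let ?R = "\<integral>\<^sup>+w. (\<integral>\<^sup>+\<xi>. ennreal ((norm (Wf w \<xi>))\<^sup>2) \<partial>P) \<partial>?\<Omega>"
  have IH: "(\<integral>\<^sup>+w. ennreal ((norm (E0 w + (\<Sum>i<m. Wf w (w (js i)))))\<^sup>2) \<partial>?\<Omega>)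
     \<le> (\<integral>\<^sup>+w. ennreal ((norm (E0 w))\<^sup>2) \<partial>?\<Omega>) + of_nat m * ?R"
    using Suc.prems by (intro Suc.IH) (auto intro: inj_on_subset)
  define U where "U w = E0 w + (\<Sum>i<m. Wf w (w (js i)))" for w
  have Wm1: "\<And>i. (\<lambda>w. Wf w (w (js i))) \<in> borel_measurable ?\<Omega>"
  proof -
    fix i
    have "(\<lambda>w. (w, w (js i))) \<in> measurable ?\<Omega> (?\<Omega> \<Otimes>\<^sub>M P)" by measurable
    from measurable_comp[OF this Wm] show "(\<lambda>w. Wf w (w (js i))) \<in> borel_measurable ?\<Omega>" by (simp add: o_def)
  qed
  have Um: "U \<in> borel_measurable ?\<Omega>" unfolding U_def using Wm1 by measurable
  have Uind: "U (w(js m := c)) = U w" for w c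
  proof -
    have "\<And>i. i < m \<Longrightarrow> js i \<noteq> js m" using Suc.prems(1) by (auto simp: inj_on_def)
    moreover have e: "E0 (w(js m := c)) = E0 w" using Suc.prems(2)[of m w c] by (simp add: fun_upd_def)
    moreover have f: "Wf (w(js m := c)) = Wf w" using Suc.prems(3)[of m w c] by (simp add: fun_upd_def)
    ultimately show ?thesis unfolding U_def by (simp only: e f) (auto intro!: sum.cong)
  qed
  have "(\<integral>\<^sup>+w. ennreal ((norm (E0 w + (\<Sum>i<Suc m. Wf w (w (js i)))))\<^sup>2) \<partial>?\<Omega>)
      = (\<integral>\<^sup>+w. ennreal ((norm (U w + Wf w (w (js m))))\<^sup>2) \<partial>?\<Omega>)"
    by (simp add: U_def add.assoc)
  also have "\<dots> \<le> (\<integral>\<^sup>+w. ennreal ((norm (U w))\<^sup>2) \<partial>?\<Omega>) + ?R"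
    by (rule key_step[OF P Um Wm Uind _ Wint W0]) (use Suc.prems(3) in \<open>auto simp: fun_upd_def\<close>)
  also have "\<dots> \<le> (\<integral>\<^sup>+w. ennreal ((norm (E0 w))\<^sup>2) \<partial>?\<Omega>) + of_nat m * ?R + ?R"
    using IH unfolding U_def by (rule add_right_mono)
  also have "\<dots> = (\<integral>\<^sup>+w. ennreal ((norm (E0 w))\<^sup>2) \<partial>?\<Omega>) + of_nat (Suc m) * ?R"
    by (simp add: algebra_simps)
  finally show ?case .
qed



context
  fixes gx :: "'x::euclidean_space \<Rightarrow> 'y::euclidean_space \<Rightarrow> 'a \<Rightarrow> 'x" and gy :: "'x \<Rightarrow> 'y \<Rightarrow> 'a \<Rightarrow> 'y"
    and X :: "'x set" and Y :: "'y set" and ax ay \<beta> r :: real and T M B :: nat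
    and online :: bool and data :: "nat \<Rightarrow> 'a" and x0 :: 'x and y0 :: 'y and z0 :: 'x
begin

abbreviation "AA w k t \<equiv> alg gx gy X Y ax ay \<beta> r T M B online data x0 y0 z0 w k t"
abbreviation "nx s \<equiv> closest_point X (sx s - ax *\<^sub>R (sGx s + r *\<^sub>R (sx s - sz s)))"
abbreviation "ny s \<equiv> closest_point Y (sy s + ay *\<^sub>R sGy s)"

lemma AA_Suc:
  "sx (AA w k (Suc t)) = nx (AA w k t)"
  "sy (AA w k (Suc t)) = ny (AA w k t)"
  "sz (AA w k (Suc t)) = sz (AA w k t) + \<beta> *\<^sub>R (nx (AA w k t) - sz (AA w k t))"
  "sGx (AA w k (Suc t)) = (1 / real M) *\<^sub>R (\<Sum>i<M. gx (nx (AA w k t)) (ny (AA w k t)) (w (k, Suc t, i))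
       - gx (sx (AA w k t)) (sy (AA w k t)) (w (k, Suc t, i))) + sGx (AA w k t)"
  "sGy (AA w k (Suc t)) = (1 / real M) *\<^sub>R (\<Sum>i<M. gy (nx (AA w k t)) (ny (AA w k t)) (w (k, Suc t, i))
       - gy (sx (AA w k t)) (sy (AA w k t)) (w (k, Suc t, i))) + sGy (AA w k t)"
  by (simp_all add: Let_def)

lemma AA_0:
  "sGx (AA w k 0) = (1 / real B) *\<^sub>R (\<Sum>i<B. gx (sx (AA w k 0)) (sy (AA w k 0)) (anchor_sample online data w k i))"
  "sGy (AA w k 0) = (1 / real B) *\<^sub>R (\<Sum>i<B. gy (sx (AA w k 0)) (sy (AA w k 0)) (anchor_sample online data w k i))"
  by (cases k; simp add: Let_def)+

lemma AA_0_Suc: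
  "sx (AA w (Suc k) 0) = sx (AA w k T)" "sy (AA w (Suc k) 0) = sy (AA w k T)" "sz (AA w (Suc k) 0) = sz (AA w k T)"
  by (simp_all add: Let_def)

lemma alg_local:
  "(\<And>k' t' i. k' < k \<or> (k' = k \<and> t' \<le> t) \<Longrightarrow> w (k', t', i) = w' (k', t', i)) \<Longrightarrow> AA w k t = AA w' k t"
proof (induction k arbitrary: t)
  case 0
  then show ?case
  proof (induction t)
    case 0
    have e: "\<And>i. w (0, 0, i) = w' (0, 0, i)" using "0.prems" by auto
    show ?case by (cases online) (simp_all add: anchor_sample_def e)
  next
    case (Suc t)
    have "AA w 0 t = AA w' 0 t" using Suc.prems by (intro Suc.IH) auto
    then show ?case using Suc.prems by (simp add: Let_def)
  qed
next
  case (Suc k)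
  note OIH = Suc.IH
  from Suc.prems show ?case
  proof (induction t)
    case 0
    have "AA w k T = AA w' k T" using "0.prems" by (intro OIH) auto
    moreover have e: "\<And>i. w (Suc k, 0, i) = w' (Suc k, 0, i)" using "0.prems" by auto
    ultimately show ?case by (cases online) (simp_all add: Let_def anchor_sample_def e)
  next
    case (Suc t)
    have "AA w (Suc k) t = AA w' (Suc k) t" using Suc.prems by (intro Suc.IH) auto
    then show ?case using Suc.prems by (simp add: Let_def)
  qed
qed

lemma alg_in:
  assumes "closed X" "X \<noteq> {}" "closed Y" "Y \<noteq> {}" "x0 \<in> X" "y0 \<in> Y"
  shows "sx (AA w k t) \<in> X \<and> sy (AA w k t) \<in> Y"
proof (induction k arbitrary: t)
  case 0
  then show ?case
  proof (induction t)
    case 0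
    then show ?case using assms by simp
  next
    case (Suc t)
    then show ?case using assms by (simp add: Let_def closest_point_in_set)
  qed
next
  case (Suc k)
  then show ?case
  proof (induction t)
    case 0
    then show ?case by (simp add: Let_def)
  next
    case (Suc t)
    then show ?case using assms by (simp add: Let_def closest_point_in_set)
  qed
qed

end



lemma gmeas_comp:
  fixes g :: "'x::euclidean_space \<Rightarrow> 'y::euclidean_space \<Rightarrow> 'a \<Rightarrow> 'z::euclidean_space"
  assumes g: "(\<lambda>(x, y, \<xi>). g x y \<xi>) \<in> borel_measurable (borel \<Otimes>\<^sub>M borel \<Otimes>\<^sub>M P)"
    and f1[measurable]: "f1 \<in> borel_measurable N" and f2[measurable]: "f2 \<in> borel_measurable N"
    and h[measurable]: "h \<in> measurable N P"
  shows "(\<lambda>n. g (f1 n) (f2 n) (h n)) \<in> borel_measurable N"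
proof -
  have "(\<lambda>n. (f1 n, f2 n, h n)) \<in> measurable N (borel \<Otimes>\<^sub>M borel \<Otimes>\<^sub>M P)" by measurable
  from measurable_comp[OF this g] show ?thesis by (simp add: o_def)
qed

lemma gFmeas_comp:
  fixes g :: "'x::euclidean_space \<Rightarrow> 'y::euclidean_space \<Rightarrow> 'a \<Rightarrow> 'z::euclidean_space"
  assumes P: "prob_space P"
    and g: "(\<lambda>(x, y, \<xi>). g x y \<xi>) \<in> borel_measurable (borel \<Otimes>\<^sub>M borel \<Otimes>\<^sub>M P)"
    and gF: "\<And>x y. (\<integral>\<xi>. g x y \<xi> \<partial>P) = gF x y"
    and f1[measurable]: "f1 \<in> borel_measurable N" and f2[measurable]: "f2 \<in> borel_measurable N"
  shows "(\<lambda>n. gF (f1 n) (f2 n)) \<in> borel_measurable N"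
proof -
  interpret prob_space P by fact
  have "(\<lambda>(n, \<xi>). g (f1 n) (f2 n) \<xi>) \<in> borel_measurable (N \<Otimes>\<^sub>M P)"
    using gmeas_comp[OF g, of "\<lambda>p. f1 (fst p)" "N \<Otimes>\<^sub>M P" "\<lambda>p. f2 (fst p)" snd]
    by (simp add: split_beta')
  then have "(\<lambda>n. \<integral>\<xi>. g (f1 n) (f2 n) \<xi> \<partial>P) \<in> borel_measurable N"
    by (rule borel_measurable_lebesgue_integral)
  then show ?thesis by (simp add: gF)
qed

context
  fixes gx :: "'x::euclidean_space \<Rightarrow> 'y::euclidean_space \<Rightarrow> 'a \<Rightarrow> 'x" and gy :: "'x \<Rightarrow> 'y \<Rightarrow> 'a \<Rightarrow> 'y"
    and X :: "'x set" and Y :: "'y set" and ax ay \<beta> r :: real and T M B :: nat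
    and online :: bool and data :: "nat \<Rightarrow> 'a" and x0 :: 'x and y0 :: 'y and z0 :: 'x
begin

lemma alg_meas:
  assumes gxm: "(\<lambda>(x, y, \<xi>). gx x y \<xi>) \<in> borel_measurable (borel \<Otimes>\<^sub>M borel \<Otimes>\<^sub>M P)"
    and gym: "(\<lambda>(x, y, \<xi>). gy x y \<xi>) \<in> borel_measurable (borel \<Otimes>\<^sub>M borel \<Otimes>\<^sub>M P)"
    and X: "convex X" "closed X" "X \<noteq> {}" and Y: "convex Y" "closed Y" "Y \<noteq> {}"
    and anc: "\<And>k i. (\<lambda>w. anchor_sample online data w k i) \<in> measurable (PiM UNIV (\<lambda>_. P)) P"
  shows "(\<lambda>w. sx (AA gx gy X Y ax ay \<beta> r T M B online data x0 y0 z0 w k t)) \<in> borel_measurable (PiM UNIV (\<lambda>_. P))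
       \<and> (\<lambda>w. sy (AA gx gy X Y ax ay \<beta> r T M B online data x0 y0 z0 w k t)) \<in> borel_measurable (PiM UNIV (\<lambda>_. P))
       \<and> (\<lambda>w. sz (AA gx gy X Y ax ay \<beta> r T M B online data x0 y0 z0 w k t)) \<in> borel_measurable (PiM UNIV (\<lambda>_. P))
       \<and> (\<lambda>w. sGx (AA gx gy X Y ax ay \<beta> r T M B online data x0 y0 z0 w k t)) \<in> borel_measurable (PiM UNIV (\<lambda>_. P))
       \<and> (\<lambda>w. sGy (AA gx gy X Y ax ay \<beta> r T M B online data x0 y0 z0 w k t)) \<in> borel_measurable (PiM UNIV (\<lambda>_. P))"
    (is "?P k t")
proof -
  let ?\<Omega> = "PiM UNIV (\<lambda>_::nat \<times> nat \<times> nat. P)"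
  have cpX[measurable]: "closest_point X \<in> borel_measurable borel"
    by (rule borel_measurable_continuous_onI) (rule continuous_on_closest_point[OF X])
  have cpY[measurable]: "closest_point Y \<in> borel_measurable borel"
    by (rule borel_measurable_continuous_onI) (rule continuous_on_closest_point[OF Y])
  have comp: "(\<lambda>w. closest_point X (f w)) \<in> borel_measurable ?\<Omega>" if "f \<in> borel_measurable ?\<Omega>" for f
    using measurable_comp[OF that cpX] by (simp add: o_def)
  have compY: "(\<lambda>w. closest_point Y (f w)) \<in> borel_measurable ?\<Omega>" if "f \<in> borel_measurable ?\<Omega>" for f
    using measurable_comp[OF that cpY] by (simp add: o_def)
  have anchor: "?P k 0" if "(\<lambda>w. sx (AA gx gy X Y ax ay \<beta> r T M B online data x0 y0 z0 w k 0)) \<in> borel_measurable ?\<Omega>"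
     "(\<lambda>w. sy (AA gx gy X Y ax ay \<beta> r T M B online data x0 y0 z0 w k 0)) \<in> borel_measurable ?\<Omega>"
     "(\<lambda>w. sz (AA gx gy X Y ax ay \<beta> r T M B online data x0 y0 z0 w k 0)) \<in> borel_measurable ?\<Omega>" for k
  proof -
    have "(\<lambda>w. gx (sx (AA gx gy X Y ax ay \<beta> r T M B online data x0 y0 z0 w k 0)) (sy (AA gx gy X Y ax ay \<beta> r T M B online data x0 y0 z0 w k 0)) (anchor_sample online data w k i)) \<in> borel_measurable ?\<Omega>" for i
      by (rule gmeas_comp[OF gxm that(1,2) anc])
    moreover have "(\<lambda>w. gy (sx (AA gx gy X Y ax ay \<beta> r T M B online data x0 y0 z0 w k 0)) (sy (AA gx gy X Y ax ay \<beta> r T M B online data x0 y0 z0 w k 0)) (anchor_sample online data w k i)) \<in> borel_measurable ?\<Omega>" for i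
      by (rule gmeas_comp[OF gym that(1,2) anc])
    ultimately show ?thesis using that by (simp only: AA_0) measurable
  qed
  have step: "?P k (Suc t)" if IH: "?P k t" for k t
  proof -
    note IH' = IH[THEN conjunct1] IH[THEN conjunct2, THEN conjunct1] IH[THEN conjunct2, THEN conjunct2, THEN conjunct1]
       IH[THEN conjunct2, THEN conjunct2, THEN conjunct2, THEN conjunct1] IH[THEN conjunct2, THEN conjunct2, THEN conjunct2, THEN conjunct2]
    have nxm: "(\<lambda>w. nx X ax r (AA gx gy X Y ax ay \<beta> r T M B online data x0 y0 z0 w k t)) \<in> borel_measurable ?\<Omega>"
      by (rule comp) (use IH' in measurable)
    have nym: "(\<lambda>w. ny Y ay (AA gx gy X Y ax ay \<beta> r T M B online data x0 y0 z0 w k t)) \<in> borel_measurable ?\<Omega>"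
      by (rule compY) (use IH' in measurable)
    have cm: "(\<lambda>w. w (k, Suc t, i)) \<in> measurable ?\<Omega> P" for i by measurable
    have "(\<lambda>w. gx (nx X ax r (AA gx gy X Y ax ay \<beta> r T M B online data x0 y0 z0 w k t)) (ny Y ay (AA gx gy X Y ax ay \<beta> r T M B online data x0 y0 z0 w k t)) (w (k, Suc t, i))) \<in> borel_measurable ?\<Omega>"
         "(\<lambda>w. gx (sx (AA gx gy X Y ax ay \<beta> r T M B online data x0 y0 z0 w k t)) (sy (AA gx gy X Y ax ay \<beta> r T M B online data x0 y0 z0 w k t)) (w (k, Suc t, i))) \<in> borel_measurable ?\<Omega>"
         "(\<lambda>w. gy (nx X ax r (AA gx gy X Y ax ay \<beta> r T M B online data x0 y0 z0 w k t)) (ny Y ay (AA gx gy X Y ax ay \<beta> r T M B online data x0 y0 z0 w k t)) (w (k, Suc t, i))) \<in> borel_measurable ?\<Omega>"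
         "(\<lambda>w. gy (sx (AA gx gy X Y ax ay \<beta> r T M B online data x0 y0 z0 w k t)) (sy (AA gx gy X Y ax ay \<beta> r T M B online data x0 y0 z0 w k t)) (w (k, Suc t, i))) \<in> borel_measurable ?\<Omega>"
      for i
      by (rule gmeas_comp[OF gxm nxm nym cm] gmeas_comp[OF gxm IH'(1,2) cm] gmeas_comp[OF gym nxm nym cm] gmeas_comp[OF gym IH'(1,2) cm])+
    then show ?thesis using nxm nym IH' by (simp only: AA_Suc) measurable
  qed
  show ?thesis
  proof (induction k arbitrary: t)
    case 0
    show ?case
    proof (induction t)
      case 0 show ?case by (rule anchor) simp_all
    next
      case (Suc t) then show ?case by (rule step)
    qed
  next
    case (Suc k)
    note OIH = Suc.IH
    show ?case
    proof (induction t)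
      case 0 show ?case by (rule anchor) (use OIH[of T] in \<open>simp_all only: AA_0_Suc\<close>)
    next
      case (Suc t) then show ?case by (rule step)
    qed
  qed
qed

end



context
  fixes gx :: "'x::euclidean_space \<Rightarrow> 'y::euclidean_space \<Rightarrow> 'a \<Rightarrow> 'x" and gy :: "'x \<Rightarrow> 'y \<Rightarrow> 'a \<Rightarrow> 'y"
    and X :: "'x set" and Y :: "'y set" and ax ay \<beta> r :: real and T M B :: nat
    and online :: bool and data :: "nat \<Rightarrow> 'a" and x0 :: 'x and y0 :: 'y and z0 :: 'x
    and P :: "'a measure"
begin

abbreviation "AlgS w k t \<equiv> alg gx gy X Y ax ay \<beta> r T M B online data x0 y0 z0 w k t"
abbreviation "OmP \<equiv> PiM UNIV (\<lambda>_::nat \<times> nat \<times> nat. P)"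

lemma step_bound:
  fixes g :: "'x \<Rightarrow> 'y \<Rightarrow> 'a \<Rightarrow> 'z::euclidean_space" and gF :: "'x \<Rightarrow> 'y \<Rightarrow> 'z"
    and Gsel :: "('x, 'y) alg_state \<Rightarrow> 'z"
  assumes P: "prob_space P"
    and gm: "(\<lambda>(x, y, \<xi>). g x y \<xi>) \<in> borel_measurable (borel \<Otimes>\<^sub>M borel \<Otimes>\<^sub>M P)"
    and gint: "\<And>x y. integrable P (g x y)"
    and gmean: "\<And>x y. (\<integral>\<xi>. g x y \<xi> \<partial>P) = gF x y"
    and glip: "\<And>x x' y y'. x \<in> X \<Longrightarrow> x' \<in> X \<Longrightarrow> y \<in> Y \<Longrightarrow> y' \<in> Y \<Longrightarrow>
        (\<integral>\<^sup>+\<xi>. ennreal ((norm (g x' y' \<xi> - g x y \<xi>))\<^sup>2) \<partial>P) \<le> ennreal (c1 * (norm (x' - x))\<^sup>2) + ennreal (c2 * (norm (y' - y))\<^sup>2)"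
    and c: "c1 \<ge> 0" "c2 \<ge> 0" and Mpos: "M > 0"
    and inXY: "\<And>w k t. sx (AlgS w k t) \<in> X \<and> sy (AlgS w k t) \<in> Y"
    and sxm: "\<And>k t. (\<lambda>w. sx (AlgS w k t)) \<in> borel_measurable OmP"
    and sym: "\<And>k t. (\<lambda>w. sy (AlgS w k t)) \<in> borel_measurable OmP"
    and Gm: "\<And>k t. (\<lambda>w. Gsel (AlgS w k t)) \<in> borel_measurable OmP"
    and Grec: "\<And>w k t. Gsel (AlgS w k (Suc t)) = (1 / real M) *\<^sub>R (\<Sum>i<M. g (sx (AlgS w k (Suc t))) (sy (AlgS w k (Suc t))) (w (k, Suc t, i))
       - g (sx (AlgS w k t)) (sy (AlgS w k t)) (w (k, Suc t, i))) + Gsel (AlgS w k t)"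
  shows "(\<integral>\<^sup>+w. ennreal ((norm (Gsel (AlgS w k (Suc t)) - gF (sx (AlgS w k (Suc t))) (sy (AlgS w k (Suc t)))))\<^sup>2) \<partial>OmP)
    \<le> (\<integral>\<^sup>+w. ennreal ((norm (Gsel (AlgS w k t) - gF (sx (AlgS w k t)) (sy (AlgS w k t))))\<^sup>2) \<partial>OmP)
      + ennreal (c1 / real M) * (\<integral>\<^sup>+w. ennreal ((norm (sx (AlgS w k (Suc t)) - sx (AlgS w k t)))\<^sup>2) \<partial>OmP)
      + ennreal (c2 / real M) * (\<integral>\<^sup>+w. ennreal ((norm (sy (AlgS w k (Suc t)) - sy (AlgS w k t)))\<^sup>2) \<partial>OmP)"
proof -
  interpret P: prob_space P by fact
  define x1 where "x1 w = sx (AlgS w k (Suc t))" for w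
  define y1 where "y1 w = sy (AlgS w k (Suc t))" for w
  define x where "x w = sx (AlgS w k t)" for w
  define y where "y w = sy (AlgS w k t)" for w
  define e where "e w = Gsel (AlgS w k t) - gF (x w) (y w)" for w
  define Wf where "Wf w \<xi> = (1 / real M) *\<^sub>R ((g (x1 w) (y1 w) \<xi> - g (x w) (y w) \<xi>) - (gF (x1 w) (y1 w) - gF (x w) (y w)))" for w \<xi>
  have x1m[measurable]: "x1 \<in> borel_measurable OmP" unfolding x1_def by (rule sxm)
  have y1m[measurable]: "y1 \<in> borel_measurable OmP" unfolding y1_def by (rule sym)
  have xm[measurable]: "x \<in> borel_measurable OmP" unfolding x_def by (rule sxm)
  have ym[measurable]: "y \<in> borel_measurable OmP" unfolding y_def by (rule sym)
  have gFm: "(\<lambda>w. gF (f1 w) (f2 w)) \<in> borel_measurable N" if "f1 \<in> borel_measurable N" "f2 \<in> borel_measurable N" for f1 f2 and N :: "'b measure"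
    by (rule gFmeas_comp[OF P gm gmean that])
  have em[measurable]: "e \<in> borel_measurable OmP"
    unfolding e_def using Gm[of k t] gFm[OF xm ym] by measurable
  have Wm[measurable]: "(\<lambda>(w, \<xi>). Wf w \<xi>) \<in> borel_measurable (OmP \<Otimes>\<^sub>M P)"
  proof -
    have a: "(\<lambda>p. x1 (fst p)) \<in> borel_measurable (OmP \<Otimes>\<^sub>M P)" "(\<lambda>p. y1 (fst p)) \<in> borel_measurable (OmP \<Otimes>\<^sub>M P)"
       "(\<lambda>p. x (fst p)) \<in> borel_measurable (OmP \<Otimes>\<^sub>M P)" "(\<lambda>p. y (fst p)) \<in> borel_measurable (OmP \<Otimes>\<^sub>M P)"
      by measurable
    have s: "snd \<in> measurable (OmP \<Otimes>\<^sub>M P) P" by measurable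
    note g1 = gmeas_comp[OF gm a(1,2) s] and g2 = gmeas_comp[OF gm a(3,4) s]
      and F1 = gFm[OF a(1,2)] and F2 = gFm[OF a(3,4)]
    show ?thesis unfolding Wf_def split_beta' using g1 g2 F1 F2 by measurable
  qed
  have loc: "AlgS (w((k, Suc t, i) := c)) k t = AlgS w k t" for w i c
    by (rule alg_local) auto
  have Eind: "e (w((k, Suc t, i) := c)) = e w" for w i c
    unfolding e_def x_def y_def by (simp only: loc)
  have loc1: "x1 (w((k, Suc t, i) := c)) = x1 w" "y1 (w((k, Suc t, i) := c)) = y1 w" for w i c
    unfolding x1_def y1_def AA_Suc by (simp_all only: loc)
  have Wind: "Wf (w((k, Suc t, i) := c)) = Wf w" for w i c
    unfolding Wf_def by (simp only: loc1) (simp add: x_def y_def loc)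
  have Wint: "integrable P (Wf w)" for w
    unfolding Wf_def using gint by auto
  have W0: "(\<integral>\<xi>. Wf w \<xi> \<partial>P) = 0" for w
    unfolding Wf_def using gint gmean by (simp add: P.prob_space)
  have inj: "inj_on (\<lambda>i. (k, Suc t, i)) {..<M}" by (auto simp: inj_on_def)
  have grp: "\<And>S G F1 F0 :: 'z. S + G - F1 = (G - F0) + (S - (F1 - F0))" by (simp add: algebra_simps)
  have eq: "Gsel (AlgS w k (Suc t)) - gF (x1 w) (y1 w) = e w + (\<Sum>i<M. Wf w (w (k, Suc t, i)))" for w
  proof -
    have "(\<Sum>i<M. Wf w (w (k, Suc t, i))) = (1 / real M) *\<^sub>R (\<Sum>i<M. g (x1 w) (y1 w) (w (k, Suc t, i)) - g (x w) (y w) (w (k, Suc t, i)))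
        - (\<Sum>i<M. (1 / real M) *\<^sub>R (gF (x1 w) (y1 w) - gF (x w) (y w)))"
      unfolding Wf_def by (simp add: scaleR_diff_right sum_subtractf scaleR_sum_right)
    also have "(\<Sum>i<M. (1 / real M) *\<^sub>R (gF (x1 w) (y1 w) - gF (x w) (y w))) = gF (x1 w) (y1 w) - gF (x w) (y w)"
      using Mpos by (simp add: sum_constant_scaleR scaleR_scaleR)
    finally have h: "(\<Sum>i<M. Wf w (w (k, Suc t, i))) = (1 / real M) *\<^sub>R (\<Sum>i<M. g (x1 w) (y1 w) (w (k, Suc t, i)) - g (x w) (y w) (w (k, Suc t, i)))
        - (gF (x1 w) (y1 w) - gF (x w) (y w))" .
    show ?thesis unfolding e_def h by (simp only: Grec x1_def y1_def x_def y_def) (rule grp)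
  qed
  define R where "R = (\<integral>\<^sup>+w. (\<integral>\<^sup>+\<xi>. ennreal ((norm (Wf w \<xi>))\<^sup>2) \<partial>P) \<partial>OmP)"
  define DX where "DX = (\<integral>\<^sup>+w. ennreal ((norm (x1 w - x w))\<^sup>2) \<partial>OmP)"
  define DY where "DY = (\<integral>\<^sup>+w. ennreal ((norm (y1 w - y w))\<^sup>2) \<partial>OmP)"
  define E where "E = (\<integral>\<^sup>+w. ennreal ((norm (e w))\<^sup>2) \<partial>OmP)"
  have L1: "(\<integral>\<^sup>+w. ennreal ((norm (Gsel (AlgS w k (Suc t)) - gF (x1 w) (y1 w)))\<^sup>2) \<partial>OmP)
      = (\<integral>\<^sup>+w. ennreal ((norm (e w + (\<Sum>i<M. Wf w (w (k, Suc t, i)))))\<^sup>2) \<partial>OmP)"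
    by (simp only: eq)
  have L2: "(\<integral>\<^sup>+w. ennreal ((norm (e w + (\<Sum>i<M. Wf w (w (k, Suc t, i)))))\<^sup>2) \<partial>OmP) \<le> E + of_nat M * R"
    unfolding E_def R_def
    by (rule key_sum[OF P em Wm inj _ _ Wint W0]) (simp_all add: Eind Wind)
  have L3: "R \<le> (\<integral>\<^sup>+w. ennreal (c1 / (real M)\<^sup>2) * ennreal ((norm (x1 w - x w))\<^sup>2) + ennreal (c2 / (real M)\<^sup>2) * ennreal ((norm (y1 w - y w))\<^sup>2) \<partial>OmP)"
    unfolding R_def
  proof (rule nn_integral_mono)
    fix w
    define D where "D \<xi> = g (x1 w) (y1 w) \<xi> - g (x w) (y w) \<xi>" for \<xi>
    have Dm: "D \<in> borel_measurable P" unfolding D_def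
      using gmeas_comp[OF gm, of "\<lambda>_. x1 w" P "\<lambda>_. y1 w" "\<lambda>\<xi>. \<xi>"] gmeas_comp[OF gm, of "\<lambda>_. x w" P "\<lambda>_. y w" "\<lambda>\<xi>. \<xi>"]
      by measurable
    have Dint: "integrable P D" unfolding D_def using gint by auto
    have ID: "(\<integral>\<xi>. D \<xi> \<partial>P) = gF (x1 w) (y1 w) - gF (x w) (y w)"
      unfolding D_def using gint gmean by simp
    have "(\<integral>\<^sup>+\<xi>. ennreal ((norm (Wf w \<xi>))\<^sup>2) \<partial>P) = (\<integral>\<^sup>+\<xi>. ennreal (1 / (real M)\<^sup>2) * ennreal ((norm (D \<xi> - (\<integral>\<zeta>. D \<zeta> \<partial>P)))\<^sup>2) \<partial>P)"
      unfolding ID by (intro nn_integral_cong) (simp add: Wf_def D_def ennreal_mult[symmetric] power_mult_distrib power_divide)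
    also have "\<dots> = ennreal (1 / (real M)\<^sup>2) * (\<integral>\<^sup>+\<xi>. ennreal ((norm (D \<xi> - (\<integral>\<zeta>. D \<zeta> \<partial>P)))\<^sup>2) \<partial>P)"
      by (rule nn_integral_cmult) (use Dm in measurable)
    also have "\<dots> \<le> ennreal (1 / (real M)\<^sup>2) * (\<integral>\<^sup>+\<xi>. ennreal ((norm (D \<xi>))\<^sup>2) \<partial>P)"
      by (intro mult_left_mono var_bound[OF P Dm Dint]) simp
    also have "\<dots> \<le> ennreal (1 / (real M)\<^sup>2) * (ennreal (c1 * (norm (x1 w - x w))\<^sup>2) + ennreal (c2 * (norm (y1 w - y w))\<^sup>2))"
      unfolding D_def
      by (intro mult_left_mono glip) (use inXY[of w k "Suc t"] inXY[of w k t] in \<open>unfold x1_def y1_def x_def y_def, blast+, simp\<close>)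
    also have "\<dots> = ennreal (c1 / (real M)\<^sup>2) * ennreal ((norm (x1 w - x w))\<^sup>2) + ennreal (c2 / (real M)\<^sup>2) * ennreal ((norm (y1 w - y w))\<^sup>2)"
      using c by (simp add: ennreal_mult[symmetric] distrib_left)
    finally show "(\<integral>\<^sup>+\<xi>. ennreal ((norm (Wf w \<xi>))\<^sup>2) \<partial>P) \<le> \<dots>" .
  qed
  have ma: "(\<lambda>w. ennreal (c1 / (real M)\<^sup>2) * ennreal ((norm (x1 w - x w))\<^sup>2)) \<in> borel_measurable OmP" by measurable
  have mb: "(\<lambda>w. ennreal (c2 / (real M)\<^sup>2) * ennreal ((norm (y1 w - y w))\<^sup>2)) \<in> borel_measurable OmP" by measurable
  have ma': "(\<lambda>w. ennreal ((norm (x1 w - x w))\<^sup>2)) \<in> borel_measurable OmP" by measurable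
  have mb': "(\<lambda>w. ennreal ((norm (y1 w - y w))\<^sup>2)) \<in> borel_measurable OmP" by measurable
  have L4: "(\<integral>\<^sup>+w. ennreal (c1 / (real M)\<^sup>2) * ennreal ((norm (x1 w - x w))\<^sup>2) + ennreal (c2 / (real M)\<^sup>2) * ennreal ((norm (y1 w - y w))\<^sup>2) \<partial>OmP)
     = ennreal (c1 / (real M)\<^sup>2) * DX + ennreal (c2 / (real M)\<^sup>2) * DY"
    unfolding DX_def DY_def nn_integral_add[OF ma mb] nn_integral_cmult[OF ma'] nn_integral_cmult[OF mb'] ..
  have L5: "of_nat M * ennreal (c1 / (real M)\<^sup>2) = ennreal (c1 / real M)"
    using Mpos c by (simp add: ennreal_of_nat_eq_real_of_nat ennreal_mult[symmetric] power2_eq_square)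
  have L6: "of_nat M * ennreal (c2 / (real M)\<^sup>2) = ennreal (c2 / real M)"
    using Mpos c by (simp add: ennreal_of_nat_eq_real_of_nat ennreal_mult[symmetric] power2_eq_square)
  have "of_nat M * R \<le> of_nat M * (ennreal (c1 / (real M)\<^sup>2) * DX + ennreal (c2 / (real M)\<^sup>2) * DY)"
    using L3 L4 by (intro mult_left_mono) auto
  also have "\<dots> = ennreal (c1 / real M) * DX + ennreal (c2 / real M) * DY"
    by (simp only: distrib_left mult.assoc[symmetric] L5 L6)
  finally have "E + of_nat M * R \<le> E + (ennreal (c1 / real M) * DX + ennreal (c2 / real M) * DY)"
    by (rule add_left_mono)
  with L1 L2 have fin: "(\<integral>\<^sup>+w. ennreal ((norm (Gsel (AlgS w k (Suc t)) - gF (x1 w) (y1 w)))\<^sup>2) \<partial>OmP)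
     \<le> E + ennreal (c1 / real M) * DX + ennreal (c2 / real M) * DY"
    by (simp only: add.assoc)
  then show ?thesis unfolding E_def DX_def DY_def e_def x1_def y1_def x_def y_def .
qed

end



lemma empirical_integral:
  fixes f :: "'a \<Rightarrow> 'z::euclidean_space"
  assumes "N > 0"
  shows "(\<integral>\<xi>. f \<xi> \<partial>empirical N data) = (1 / real N) *\<^sub>R (\<Sum>i<N. f (data i))"
proof -
  have "(\<integral>\<xi>. f \<xi> \<partial>empirical N data) = (\<integral>i. f (data i) \<partial>measure_pmf (pmf_of_set {..<N}))"
    unfolding empirical_def by simp
  also have "\<dots> = (\<Sum>i<N. pmf (pmf_of_set {..<N}) i *\<^sub>R f (data i))"
  proof (rule integral_measure_pmf)
    have "set_pmf (pmf_of_set {..<N}) = {..<N}" by (rule set_pmf_of_set) (use assms in auto)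
    then show "\<And>a. a \<in> set_pmf (pmf_of_set {..<N}) \<Longrightarrow> f (data a) \<noteq> 0 \<Longrightarrow> a \<in> {..<N}" by simp
  qed simp
  also have "\<dots> = (1 / real N) *\<^sub>R (\<Sum>i<N. f (data i))"
  proof -
    have ne: "{..<N} \<noteq> {}" using assms by auto
    show ?thesis unfolding scaleR_sum_right by (intro sum.cong refl) (simp add: ne)
  qed
  finally show ?thesis .
qed

context
  fixes gx :: "'x::euclidean_space \<Rightarrow> 'y::euclidean_space \<Rightarrow> 'a \<Rightarrow> 'x" and gy :: "'x \<Rightarrow> 'y \<Rightarrow> 'a \<Rightarrow> 'y"
    and X :: "'x set" and Y :: "'y set" and ax ay \<beta> r :: real and T M B :: nat
    and online :: bool and data :: "nat \<Rightarrow> 'a" and x0 :: 'x and y0 :: 'y and z0 :: 'x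
    and P :: "'a measure"
begin

lemma anchor_bound:
  fixes g :: "'x \<Rightarrow> 'y \<Rightarrow> 'a \<Rightarrow> 'z::euclidean_space" and gF :: "'x \<Rightarrow> 'y \<Rightarrow> 'z"
    and Gsel :: "('x, 'y) alg_state \<Rightarrow> 'z"
  assumes P: "prob_space P"
    and gm: "(\<lambda>(x, y, \<xi>). g x y \<xi>) \<in> borel_measurable (borel \<Otimes>\<^sub>M borel \<Otimes>\<^sub>M P)"
    and gint: "\<And>x y. integrable P (g x y)"
    and gmean: "\<And>x y. (\<integral>\<xi>. g x y \<xi> \<partial>P) = gF x y"
    and gvar: "\<And>x y. (\<integral>\<^sup>+\<xi>. ennreal ((norm (g x y \<xi> - gF x y))\<^sup>2) \<partial>P) \<le> ennreal (\<sigma>\<^sup>2)"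
    and Bpos: "B > 0"
    and sxm: "\<And>k t. (\<lambda>w. sx (AlgS gx gy X Y ax ay \<beta> r T M B online data x0 y0 z0 w k t)) \<in> borel_measurable (OmP P)"
    and sym: "\<And>k t. (\<lambda>w. sy (AlgS gx gy X Y ax ay \<beta> r T M B online data x0 y0 z0 w k t)) \<in> borel_measurable (OmP P)"
    and G0: "\<And>w k. Gsel (AlgS gx gy X Y ax ay \<beta> r T M B online data x0 y0 z0 w k 0) = (1 / real B) *\<^sub>R (\<Sum>i<B. g (sx (AlgS gx gy X Y ax ay \<beta> r T M B online data x0 y0 z0 w k 0)) (sy (AlgS gx gy X Y ax ay \<beta> r T M B online data x0 y0 z0 w k 0)) (anchor_sample online data w k i))"
    and setting: "(\<not> online \<and> N > 0 \<and> P = empirical N data \<and> B = N \<and> C = 0) \<or> (online \<and> C = \<sigma>\<^sup>2 / real B)"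
  shows "(\<integral>\<^sup>+w. ennreal ((norm (Gsel (AlgS gx gy X Y ax ay \<beta> r T M B online data x0 y0 z0 w k 0)
      - gF (sx (AlgS gx gy X Y ax ay \<beta> r T M B online data x0 y0 z0 w k 0)) (sy (AlgS gx gy X Y ax ay \<beta> r T M B online data x0 y0 z0 w k 0))))\<^sup>2) \<partial>OmP P) \<le> ennreal C"
proof -
  interpret P: prob_space P by fact
  interpret O: prob_space "OmP P" by (rule prob_space_PiM) (use P in auto)
  define px where "px w = sx (AlgS gx gy X Y ax ay \<beta> r T M B online data x0 y0 z0 w k 0)" for w
  define py where "py w = sy (AlgS gx gy X Y ax ay \<beta> r T M B online data x0 y0 z0 w k 0)" for w
  have pxm[measurable]: "px \<in> borel_measurable (OmP P)" unfolding px_def by (rule sxm)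
  have pym[measurable]: "py \<in> borel_measurable (OmP P)" unfolding py_def by (rule sym)
  show ?thesis
  proof (cases online)
    case False
    with setting have N: "N > 0" "P = empirical N data" "B = N" "C = 0" by auto
    have "Gsel (AlgS gx gy X Y ax ay \<beta> r T M B online data x0 y0 z0 w k 0) - gF (px w) (py w) = 0" for w
    proof -
      have "Gsel (AlgS gx gy X Y ax ay \<beta> r T M B online data x0 y0 z0 w k 0) = (1 / real B) *\<^sub>R (\<Sum>i<B. g (px w) (py w) (data i))"
        unfolding G0 px_def py_def anchor_sample_def using False by simp
      then show ?thesis
        using empirical_integral[OF N(1), where f="g (px w) (py w)" and data=data] gmean[of "px w" "py w"] N
        by simp
    qed
    then show ?thesis unfolding px_def py_def by (simp add: N)
  next
    case True
    with setting have C: "C = \<sigma>\<^sup>2 / real B" by auto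
    define Wf where "Wf w \<xi> = (1 / real B) *\<^sub>R (g (px w) (py w) \<xi> - gF (px w) (py w))" for w \<xi>
    have gFm: "(\<lambda>w. gF (f1 w) (f2 w)) \<in> borel_measurable N" if "f1 \<in> borel_measurable N" "f2 \<in> borel_measurable N" for f1 f2 and N :: "'b measure"
      by (rule gFmeas_comp[OF P gm gmean that])
    have Wm[measurable]: "(\<lambda>(w, \<xi>). Wf w \<xi>) \<in> borel_measurable (OmP P \<Otimes>\<^sub>M P)"
    proof -
      have a: "(\<lambda>p. px (fst p)) \<in> borel_measurable (OmP P \<Otimes>\<^sub>M P)" "(\<lambda>p. py (fst p)) \<in> borel_measurable (OmP P \<Otimes>\<^sub>M P)"
        by measurable
      have s: "snd \<in> measurable (OmP P \<Otimes>\<^sub>M P) P" by measurable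
      note g1 = gmeas_comp[OF gm a(1,2) s] and F1 = gFm[OF a(1,2)]
      show ?thesis unfolding Wf_def split_beta' using g1 F1 by measurable
    qed
    have loc: "px (w((k, 0, i) := c)) = px w \<and> py (w((k, 0, i) := c)) = py w" for w i c
    proof (cases k)
      case 0 then show ?thesis by (simp add: px_def py_def)
    next
      case (Suc k')
      have "AlgS gx gy X Y ax ay \<beta> r T M B online data x0 y0 z0 (w((k, 0, i) := c)) k' T = AlgS gx gy X Y ax ay \<beta> r T M B online data x0 y0 z0 w k' T"
        by (rule alg_local) (auto simp: Suc)
      then show ?thesis by (simp only: px_def py_def Suc AA_0_Suc)
    qed
    have Wind: "Wf (w((k, 0, i) := c)) = Wf w" for w i c
      unfolding Wf_def using loc[of w i c] by simp
    have Wint: "integrable P (Wf w)" for w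
      unfolding Wf_def using gint by auto
    have W0: "(\<integral>\<xi>. Wf w \<xi> \<partial>P) = 0" for w
      unfolding Wf_def using gint gmean by (simp add: P.prob_space)
    have inj: "inj_on (\<lambda>i. (k, 0::nat, i)) {..<B}" by (auto simp: inj_on_def)
    have eq: "Gsel (AlgS gx gy X Y ax ay \<beta> r T M B online data x0 y0 z0 w k 0) - gF (px w) (py w) = 0 + (\<Sum>i<B. Wf w (w (k, 0, i)))" for w
    proof -
      have "(\<Sum>i<B. Wf w (w (k, 0, i))) = (1 / real B) *\<^sub>R (\<Sum>i<B. g (px w) (py w) (w (k, 0, i)))
          - (\<Sum>i<B. (1 / real B) *\<^sub>R gF (px w) (py w))"
        unfolding Wf_def by (simp add: scaleR_diff_right sum_subtractf scaleR_sum_right)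
      also have "(\<Sum>i<B. (1 / real B) *\<^sub>R gF (px w) (py w)) = gF (px w) (py w)"
        using Bpos by (simp add: sum_constant_scaleR scaleR_scaleR)
      moreover have "Gsel (AlgS gx gy X Y ax ay \<beta> r T M B online data x0 y0 z0 w k 0) = (1 / real B) *\<^sub>R (\<Sum>i<B. g (px w) (py w) (w (k, 0, i)))"
        unfolding G0 px_def py_def anchor_sample_def using True by simp
      ultimately show ?thesis by simp
    qed
    have "(\<integral>\<^sup>+w. ennreal ((norm (Gsel (AlgS gx gy X Y ax ay \<beta> r T M B online data x0 y0 z0 w k 0) - gF (px w) (py w)))\<^sup>2) \<partial>OmP P)
        = (\<integral>\<^sup>+w. ennreal ((norm ((\<lambda>_. 0) w + (\<Sum>i<B. Wf w (w (k, 0, i)))))\<^sup>2) \<partial>OmP P)"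
      by (simp only: eq)
    also have "\<dots> \<le> (\<integral>\<^sup>+w. ennreal ((norm ((\<lambda>_. 0::'z) w))\<^sup>2) \<partial>OmP P) + of_nat B * (\<integral>\<^sup>+w. (\<integral>\<^sup>+\<xi>. ennreal ((norm (Wf w \<xi>))\<^sup>2) \<partial>P) \<partial>OmP P)"
      by (rule key_sum[OF P _ Wm inj _ _ Wint W0]) (simp_all add: Wind)
    also have "(\<integral>\<^sup>+w. (\<integral>\<^sup>+\<xi>. ennreal ((norm (Wf w \<xi>))\<^sup>2) \<partial>P) \<partial>OmP P) \<le> (\<integral>\<^sup>+w. ennreal (\<sigma>\<^sup>2 / (real B)\<^sup>2) \<partial>OmP P)"
    proof (rule nn_integral_mono)
      fix w
      have Dm: "(\<lambda>\<xi>. g (px w) (py w) \<xi> - gF (px w) (py w)) \<in> borel_measurable P"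
        using gmeas_comp[OF gm, of "\<lambda>_. px w" P "\<lambda>_. py w" "\<lambda>\<xi>. \<xi>"] by measurable
      have "(\<integral>\<^sup>+\<xi>. ennreal ((norm (Wf w \<xi>))\<^sup>2) \<partial>P) = (\<integral>\<^sup>+\<xi>. ennreal (1 / (real B)\<^sup>2) * ennreal ((norm (g (px w) (py w) \<xi> - gF (px w) (py w)))\<^sup>2) \<partial>P)"
        by (intro nn_integral_cong) (simp add: Wf_def ennreal_mult[symmetric] power_mult_distrib power_divide)
      also have "\<dots> = ennreal (1 / (real B)\<^sup>2) * (\<integral>\<^sup>+\<xi>. ennreal ((norm (g (px w) (py w) \<xi> - gF (px w) (py w)))\<^sup>2) \<partial>P)"
        by (rule nn_integral_cmult) (use Dm in measurable)
      also have "\<dots> \<le> ennreal (1 / (real B)\<^sup>2) * ennreal (\<sigma>\<^sup>2)"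
        by (intro mult_left_mono gvar) simp
      also have "\<dots> = ennreal (\<sigma>\<^sup>2 / (real B)\<^sup>2)"
        by (simp add: ennreal_mult[symmetric])
      finally show "(\<integral>\<^sup>+\<xi>. ennreal ((norm (Wf w \<xi>))\<^sup>2) \<partial>P) \<le> ennreal (\<sigma>\<^sup>2 / (real B)\<^sup>2)" .
    qed
    hence "of_nat B * (\<integral>\<^sup>+w. (\<integral>\<^sup>+\<xi>. ennreal ((norm (Wf w \<xi>))\<^sup>2) \<partial>P) \<partial>OmP P) \<le> of_nat B * (\<integral>\<^sup>+w. ennreal (\<sigma>\<^sup>2 / (real B)\<^sup>2) \<partial>OmP P)"
      by (rule mult_left_mono) simp
    hence "(\<integral>\<^sup>+w. ennreal ((norm ((\<lambda>_. 0::'z) w))\<^sup>2) \<partial>OmP P) + of_nat B * (\<integral>\<^sup>+w. (\<integral>\<^sup>+\<xi>. ennreal ((norm (Wf w \<xi>))\<^sup>2) \<partial>P) \<partial>OmP P)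
       \<le> of_nat B * ennreal (\<sigma>\<^sup>2 / (real B)\<^sup>2)"
      by (simp add: O.emeasure_space_1)
    also have "of_nat B * ennreal (\<sigma>\<^sup>2 / (real B)\<^sup>2) = ennreal C"
      using Bpos by (simp add: C ennreal_of_nat_eq_real_of_nat ennreal_mult[symmetric] power2_eq_square)
    finally show ?thesis unfolding px_def py_def .
  qed
qed

end



context
  fixes gx :: "'x::euclidean_space \<Rightarrow> 'y::euclidean_space \<Rightarrow> 'a \<Rightarrow> 'x" and gy :: "'x \<Rightarrow> 'y \<Rightarrow> 'a \<Rightarrow> 'y"
    and X :: "'x set" and Y :: "'y set" and ax ay \<beta> r :: real and T M B :: nat
    and online :: bool and data :: "nat \<Rightarrow> 'a" and x0 :: 'x and y0 :: 'y and z0 :: 'x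
    and P :: "'a measure"
begin

lemma err_bound:
  fixes g :: "'x \<Rightarrow> 'y \<Rightarrow> 'a \<Rightarrow> 'z::euclidean_space" and gF :: "'x \<Rightarrow> 'y \<Rightarrow> 'z"
    and Gsel :: "('x, 'y) alg_state \<Rightarrow> 'z"
  assumes P: "prob_space P"
    and gm: "(\<lambda>(x, y, \<xi>). g x y \<xi>) \<in> borel_measurable (borel \<Otimes>\<^sub>M borel \<Otimes>\<^sub>M P)"
    and gint: "\<And>x y. integrable P (g x y)"
    and gmean: "\<And>x y. (\<integral>\<xi>. g x y \<xi> \<partial>P) = gF x y"
    and gvar: "\<And>x y. (\<integral>\<^sup>+\<xi>. ennreal ((norm (g x y \<xi> - gF x y))\<^sup>2) \<partial>P) \<le> ennreal (\<sigma>\<^sup>2)"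
    and glip: "\<And>x x' y y'. x \<in> X \<Longrightarrow> x' \<in> X \<Longrightarrow> y \<in> Y \<Longrightarrow> y' \<in> Y \<Longrightarrow>
        (\<integral>\<^sup>+\<xi>. ennreal ((norm (g x' y' \<xi> - g x y \<xi>))\<^sup>2) \<partial>P) \<le> ennreal (c1 * (norm (x' - x))\<^sup>2) + ennreal (c2 * (norm (y' - y))\<^sup>2)"
    and c: "c1 \<ge> 0" "c2 \<ge> 0" and Mpos: "M > 0" and Bpos: "B > 0"
    and inXY: "\<And>w k t. sx (AlgS gx gy X Y ax ay \<beta> r T M B online data x0 y0 z0 w k t) \<in> X \<and> sy (AlgS gx gy X Y ax ay \<beta> r T M B online data x0 y0 z0 w k t) \<in> Y"
    and sxm: "\<And>k t. (\<lambda>w. sx (AlgS gx gy X Y ax ay \<beta> r T M B online data x0 y0 z0 w k t)) \<in> borel_measurable (OmP P)"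
    and sym: "\<And>k t. (\<lambda>w. sy (AlgS gx gy X Y ax ay \<beta> r T M B online data x0 y0 z0 w k t)) \<in> borel_measurable (OmP P)"
    and Gm: "\<And>k t. (\<lambda>w. Gsel (AlgS gx gy X Y ax ay \<beta> r T M B online data x0 y0 z0 w k t)) \<in> borel_measurable (OmP P)"
    and Grec: "\<And>w k t. Gsel (AlgS gx gy X Y ax ay \<beta> r T M B online data x0 y0 z0 w k (Suc t)) = (1 / real M) *\<^sub>R (\<Sum>i<M. g (sx (AlgS gx gy X Y ax ay \<beta> r T M B online data x0 y0 z0 w k (Suc t))) (sy (AlgS gx gy X Y ax ay \<beta> r T M B online data x0 y0 z0 w k (Suc t))) (w (k, Suc t, i))
       - g (sx (AlgS gx gy X Y ax ay \<beta> r T M B online data x0 y0 z0 w k t)) (sy (AlgS gx gy X Y ax ay \<beta> r T M B online data x0 y0 z0 w k t)) (w (k, Suc t, i))) + Gsel (AlgS gx gy X Y ax ay \<beta> r T M B online data x0 y0 z0 w k t)"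
    and G0: "\<And>w k. Gsel (AlgS gx gy X Y ax ay \<beta> r T M B online data x0 y0 z0 w k 0) = (1 / real B) *\<^sub>R (\<Sum>i<B. g (sx (AlgS gx gy X Y ax ay \<beta> r T M B online data x0 y0 z0 w k 0)) (sy (AlgS gx gy X Y ax ay \<beta> r T M B online data x0 y0 z0 w k 0)) (anchor_sample online data w k i))"
    and setting: "(\<not> online \<and> N > 0 \<and> P = empirical N data \<and> B = N \<and> C = 0) \<or> (online \<and> C = \<sigma>\<^sup>2 / real B)"
  shows "(\<integral>\<^sup>+w. ennreal ((norm (Gsel (AlgS gx gy X Y ax ay \<beta> r T M B online data x0 y0 z0 w k t)
      - gF (sx (AlgS gx gy X Y ax ay \<beta> r T M B online data x0 y0 z0 w k t)) (sy (AlgS gx gy X Y ax ay \<beta> r T M B online data x0 y0 z0 w k t))))\<^sup>2) \<partial>OmP P)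
    \<le> ennreal (c1 / real M) * (\<Sum>b<t. \<integral>\<^sup>+w. ennreal ((norm (sx (AlgS gx gy X Y ax ay \<beta> r T M B online data x0 y0 z0 w k (Suc b)) - sx (AlgS gx gy X Y ax ay \<beta> r T M B online data x0 y0 z0 w k b)))\<^sup>2) \<partial>OmP P)
      + ennreal (c2 / real M) * (\<Sum>b<t. \<integral>\<^sup>+w. ennreal ((norm (sy (AlgS gx gy X Y ax ay \<beta> r T M B online data x0 y0 z0 w k (Suc b)) - sy (AlgS gx gy X Y ax ay \<beta> r T M B online data x0 y0 z0 w k b)))\<^sup>2) \<partial>OmP P)
      + ennreal C"
proof (induction t)
  case 0
  show ?case using anchor_bound[OF P gm gint gmean gvar Bpos sxm sym G0 setting, of k] by simp
next
  case (Suc t)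
  define E where "E t = (\<integral>\<^sup>+w. ennreal ((norm (Gsel (AlgS gx gy X Y ax ay \<beta> r T M B online data x0 y0 z0 w k t)
      - gF (sx (AlgS gx gy X Y ax ay \<beta> r T M B online data x0 y0 z0 w k t)) (sy (AlgS gx gy X Y ax ay \<beta> r T M B online data x0 y0 z0 w k t))))\<^sup>2) \<partial>OmP P)" for t
  define DX where "DX b = (\<integral>\<^sup>+w. ennreal ((norm (sx (AlgS gx gy X Y ax ay \<beta> r T M B online data x0 y0 z0 w k (Suc b)) - sx (AlgS gx gy X Y ax ay \<beta> r T M B online data x0 y0 z0 w k b)))\<^sup>2) \<partial>OmP P)" for b
  define DY where "DY b = (\<integral>\<^sup>+w. ennreal ((norm (sy (AlgS gx gy X Y ax ay \<beta> r T M B online data x0 y0 z0 w k (Suc b)) - sy (AlgS gx gy X Y ax ay \<beta> r T M B online data x0 y0 z0 w k b)))\<^sup>2) \<partial>OmP P)" for b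
  have IH: "E t \<le> ennreal (c1 / real M) * (\<Sum>b<t. DX b) + ennreal (c2 / real M) * (\<Sum>b<t. DY b) + ennreal C"
    using Suc.IH unfolding E_def DX_def DY_def .
  have st: "E (Suc t) \<le> E t + ennreal (c1 / real M) * DX t + ennreal (c2 / real M) * DY t"
    unfolding E_def DX_def DY_def
    by (rule step_bound[OF P gm gint gmean glip c Mpos inXY sxm sym Gm Grec])
  have "E (Suc t) \<le> (ennreal (c1 / real M) * (\<Sum>b<t. DX b) + ennreal (c2 / real M) * (\<Sum>b<t. DY b) + ennreal C) + ennreal (c1 / real M) * DX t + ennreal (c2 / real M) * DY t"
    using st IH by (meson add_right_mono order_trans)
  also have "\<dots> = ennreal (c1 / real M) * (\<Sum>b<Suc t. DX b) + ennreal (c2 / real M) * (\<Sum>b<Suc t. DY b) + ennreal C"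
    by (simp add: distrib_left ac_simps)
  finally show ?case unfolding E_def DX_def DY_def .
qed

end



theorem lemmaA1:
  fixes X :: "'x::euclidean_space set" and Y :: "'y::euclidean_space set"
    and P :: "'a measure"
    and f :: "'x \<Rightarrow> 'y \<Rightarrow> 'a \<Rightarrow> real"
    and gx :: "'x \<Rightarrow> 'y \<Rightarrow> 'a \<Rightarrow> 'x" and gy :: "'x \<Rightarrow> 'y \<Rightarrow> 'a \<Rightarrow> 'y"
    and gFx :: "'x \<Rightarrow> 'y \<Rightarrow> 'x" and gFy :: "'x \<Rightarrow> 'y \<Rightarrow> 'y"
    and DY ell Lx Ly \<rho> \<sigma>x \<sigma>y Flow Cx Cy ax ay \<beta> r :: real
    and K T M B N :: nat and online :: bool and data :: "nat \<Rightarrow> 'a"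
    and x0 :: 'x and y0 :: 'y and z0 :: 'x
    and \<Omega> :: "(nat \<times> nat \<times> nat \<Rightarrow> 'a) measure"
    and xs :: "nat \<Rightarrow> nat \<Rightarrow> (nat \<times> nat \<times> nat \<Rightarrow> 'a) \<Rightarrow> 'x"
    and ys :: "nat \<Rightarrow> nat \<Rightarrow> (nat \<times> nat \<times> nat \<Rightarrow> 'a) \<Rightarrow> 'y"
    and Gx :: "nat \<Rightarrow> nat \<Rightarrow> (nat \<times> nat \<times> nat \<Rightarrow> 'a) \<Rightarrow> 'x"
    and Gy :: "nat \<Rightarrow> nat \<Rightarrow> (nat \<times> nat \<times> nat \<Rightarrow> 'a) \<Rightarrow> 'y"
    and k \<tau> :: nat
  assumes X: "X \<noteq> {}" "closed X" "convex X"
    and Y: "Y \<noteq> {}" "closed Y" "convex Y"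
    and P: "prob_space P"
    \<comment> \<open>measurability / integrability implicit in the use of expectations\<close>
    and f_meas: "(\<lambda>(x, y, \<xi>). f x y \<xi>) \<in> borel_measurable (borel \<Otimes>\<^sub>M borel \<Otimes>\<^sub>M P)"
    and gx_meas: "(\<lambda>(x, y, \<xi>). gx x y \<xi>) \<in> borel_measurable (borel \<Otimes>\<^sub>M borel \<Otimes>\<^sub>M P)"
    and gy_meas: "(\<lambda>(x, y, \<xi>). gy x y \<xi>) \<in> borel_measurable (borel \<Otimes>\<^sub>M borel \<Otimes>\<^sub>M P)"
    and f_int: "\<And>x y. integrable P (f x y)"
    \<comment> \<open>gx, gy are the partial gradients of f(.,.;xi); gFx, gFy those of F\<close>
    and gx_grad: "\<And>x y \<xi>. ((\<lambda>u. f u y \<xi>) has_derivative (\<lambda>h. gx x y \<xi> \<bullet> h)) (at x)"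
    and gy_grad: "\<And>x y \<xi>. ((\<lambda>v. f x v \<xi>) has_derivative (\<lambda>h. gy x y \<xi> \<bullet> h)) (at y)"
    and gFx_grad: "\<And>x y. ((\<lambda>u. Fexp P f u y) has_derivative (\<lambda>h. gFx x y \<bullet> h)) (at x)"
    and gFy_grad: "\<And>x y. ((\<lambda>v. Fexp P f x v) has_derivative (\<lambda>h. gFy x y \<bullet> h)) (at y)"
    \<comment> \<open>(i)\<close>
    and A1: "compact Y" "DY = diameter Y"
    \<comment> \<open>(ii)\<close>
    and A2: "ell > 0" "\<And>x1 x2 y1 y2. x1 \<in> X \<Longrightarrow> x2 \<in> X \<Longrightarrow> y1 \<in> Y \<Longrightarrow> y2 \<in> Y \<Longrightarrow>
          (\<integral>\<^sup>+\<xi>. ennreal \<bar>f x1 y1 \<xi> - f x2 y2 \<xi>\<bar> \<partial>P) \<le> ennreal (ell * (norm (x1 - x2) + norm (y1 - y2)))"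
    \<comment> \<open>(iii)\<close>
    and A3x: "\<And>x1 x2 y. x1 \<in> X \<Longrightarrow> x2 \<in> X \<Longrightarrow> y \<in> Y \<Longrightarrow>
          (\<integral>\<^sup>+\<xi>. ennreal ((norm (gx x1 y \<xi> - gx x2 y \<xi>))\<^sup>2) \<partial>P) \<le> ennreal (Lx\<^sup>2 * (norm (x1 - x2))\<^sup>2)"
    and A3xy: "\<And>x y1 y2. x \<in> X \<Longrightarrow> y1 \<in> Y \<Longrightarrow> y2 \<in> Y \<Longrightarrow>
          (\<integral>\<^sup>+\<xi>. ennreal ((norm (gx x y1 \<xi> - gx x y2 \<xi>))\<^sup>2) \<partial>P) \<le> ennreal (Ly\<^sup>2 * (norm (y1 - y2))\<^sup>2)"
    and A3y: "\<And>x1 x2 y1 y2. x1 \<in> X \<Longrightarrow> x2 \<in> X \<Longrightarrow> y1 \<in> Y \<Longrightarrow> y2 \<in> Y \<Longrightarrow>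
          (\<integral>\<^sup>+\<xi>. ennreal ((norm (gy x1 y1 \<xi> - gy x2 y2 \<xi>))\<^sup>2) \<partial>P)
            \<le> ennreal (Ly\<^sup>2 * ((norm (x1 - x2))\<^sup>2 + (norm (y1 - y2))\<^sup>2))"
    \<comment> \<open>(iv)\<close>
    and A4: "\<And>y. y \<in> Y \<Longrightarrow> convex_on X (\<lambda>x. Fexp P f x y + \<rho> / 2 * (norm x)\<^sup>2)"
    \<comment> \<open>(v)\<close>
    and A5x: "\<And>x y. integrable P (gx x y) \<and> (\<integral>\<xi>. gx x y \<xi> \<partial>P) = gFx x y"
    and A5y: "\<And>x y. integrable P (gy x y) \<and> (\<integral>\<xi>. gy x y \<xi> \<partial>P) = gFy x y"
    and A5vx: "\<And>x y. (\<integral>\<^sup>+\<xi>. ennreal ((norm (gx x y \<xi> - gFx x y))\<^sup>2) \<partial>P) \<le> ennreal (\<sigma>x\<^sup>2)"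
    and A5vy: "\<And>x y. (\<integral>\<^sup>+\<xi>. ennreal ((norm (gy x y \<xi> - gFy x y))\<^sup>2) \<partial>P) \<le> ennreal (\<sigma>y\<^sup>2)"
    \<comment> \<open>(vi): max_y min_x F(x,y) >= Flow\<close>
    and A6: "\<exists>y\<in>Y. \<forall>x\<in>X. Fexp P f x y \<ge> Flow"
    \<comment> \<open>algorithm parameters and input\<close>
    and params: "K > 0" "T > 0" "M > 0" "B > 0" "ax > 0" "ay > 0" "\<beta> > 0" "r > 0"
    and init: "x0 \<in> X" "y0 \<in> Y"
    \<comment> \<open>finite-sum vs. online setting\<close>
    and setting: "(\<not> online \<and> N > 0 \<and> P = empirical N data \<and> B = N \<and> Cx = 0 \<and> Cy = 0)
                 \<or> (online \<and> Cx = \<sigma>x\<^sup>2 / real B \<and> Cy = \<sigma>y\<^sup>2 / real B)"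
    \<comment> \<open>all randomness: i.i.d. samples omega(k,tau,i) ~ P\<close>
    and Omega: "\<Omega> = PiM UNIV (\<lambda>_. P)"
    and iter: "xs = (\<lambda>k \<tau> \<omega>. sx (alg gx gy X Y ax ay \<beta> r T M B online data x0 y0 z0 \<omega> k \<tau>))"
              "ys = (\<lambda>k \<tau> \<omega>. sy (alg gx gy X Y ax ay \<beta> r T M B online data x0 y0 z0 \<omega> k \<tau>))"
              "Gx = (\<lambda>k \<tau> \<omega>. sGx (alg gx gy X Y ax ay \<beta> r T M B online data x0 y0 z0 \<omega> k \<tau>))"
              "Gy = (\<lambda>k \<tau> \<omega>. sGy (alg gx gy X Y ax ay \<beta> r T M B online data x0 y0 z0 \<omega> k \<tau>))"
    and idx: "k < K" "\<tau> \<le> T - 1"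
  shows "((\<integral>\<^sup>+\<omega>. ennreal ((norm (Gy k \<tau> \<omega> - gFy (xs k \<tau> \<omega>) (ys k \<tau> \<omega>)))\<^sup>2) \<partial>\<Omega>)
           \<le> ennreal (Ly\<^sup>2 / real M) * (\<Sum>b<\<tau>. \<integral>\<^sup>+\<omega>. ennreal ((norm (xs k (Suc b) \<omega> - xs k b \<omega>))\<^sup>2) \<partial>\<Omega>)
             + ennreal (Ly\<^sup>2 / real M) * (\<Sum>b<\<tau>. \<integral>\<^sup>+\<omega>. ennreal ((norm (ys k (Suc b) \<omega> - ys k b \<omega>))\<^sup>2) \<partial>\<Omega>)
             + ennreal Cy)
       \<and> ((\<integral>\<^sup>+\<omega>. ennreal ((norm (Gx k \<tau> \<omega> - gFx (xs k \<tau> \<omega>) (ys k \<tau> \<omega>)))\<^sup>2) \<partial>\<Omega>)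
           \<le> ennreal (2 * Lx\<^sup>2 / real M) * (\<Sum>b<\<tau>. \<integral>\<^sup>+\<omega>. ennreal ((norm (xs k (Suc b) \<omega> - xs k b \<omega>))\<^sup>2) \<partial>\<Omega>)
             + ennreal (2 * Ly\<^sup>2 / real M) * (\<Sum>b<\<tau>. \<integral>\<^sup>+\<omega>. ennreal ((norm (ys k (Suc b) \<omega> - ys k b \<omega>))\<^sup>2) \<partial>\<Omega>)
             + ennreal Cx)"
proof -
  interpret P: prob_space P by (rule P)
  let ?A = "\<lambda>w k t. alg gx gy X Y ax ay \<beta> r T M B online data x0 y0 z0 w k t"
  have anc: "\<And>k i. (\<lambda>w. anchor_sample online data w k i) \<in> measurable (PiM UNIV (\<lambda>_. P)) P"
  proof -
    fix k i
    show "(\<lambda>w. anchor_sample online data w k i) \<in> measurable (PiM UNIV (\<lambda>_. P)) P"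
    proof (cases online)
      case True then show ?thesis unfolding anchor_sample_def by simp
    next
      case False
      with setting have "P = empirical N data" by auto
      then have "space P = UNIV" by (simp add: empirical_def)
      with False show ?thesis unfolding anchor_sample_def by simp
    qed
  qed
  note meas = alg_meas[OF gx_meas gy_meas X(3,2,1) Y(3,2,1) anc]
  have sxm: "\<And>k t. (\<lambda>w. sx (?A w k t)) \<in> borel_measurable (PiM UNIV (\<lambda>_. P))" using meas by blast
  have sym: "\<And>k t. (\<lambda>w. sy (?A w k t)) \<in> borel_measurable (PiM UNIV (\<lambda>_. P))" using meas by blast
  have Gxm: "\<And>k t. (\<lambda>w. sGx (?A w k t)) \<in> borel_measurable (PiM UNIV (\<lambda>_. P))" using meas by blast
  have Gym: "\<And>k t. (\<lambda>w. sGy (?A w k t)) \<in> borel_measurable (PiM UNIV (\<lambda>_. P))" using meas by blast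
  have inXY: "\<And>w k t. sx (?A w k t) \<in> X \<and> sy (?A w k t) \<in> Y"
    by (rule alg_in) (use X Y init in auto)
  have gxint: "\<And>x y. integrable P (gx x y)" and gxmean: "\<And>x y. (\<integral>\<xi>. gx x y \<xi> \<partial>P) = gFx x y"
    using A5x by auto
  have gyint: "\<And>x y. integrable P (gy x y)" and gymean: "\<And>x y. (\<integral>\<xi>. gy x y \<xi> \<partial>P) = gFy x y"
    using A5y by auto
  have gx_P: "(\<lambda>\<xi>. gx x y \<xi>) \<in> borel_measurable P" for x y
    using gmeas_comp[OF gx_meas, of "\<lambda>_. x" P "\<lambda>_. y" "\<lambda>\<xi>. \<xi>"] by simp
  have liny: "(\<integral>\<^sup>+\<xi>. ennreal ((norm (gy x' y' \<xi> - gy x y \<xi>))\<^sup>2) \<partial>P) \<le> ennreal (Ly\<^sup>2 * (norm (x' - x))\<^sup>2) + ennreal (Ly\<^sup>2 * (norm (y' - y))\<^sup>2)"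
    if "x \<in> X" "x' \<in> X" "y \<in> Y" "y' \<in> Y" for x x' y y'
  proof -
    have "(\<integral>\<^sup>+\<xi>. ennreal ((norm (gy x' y' \<xi> - gy x y \<xi>))\<^sup>2) \<partial>P) \<le> ennreal (Ly\<^sup>2 * ((norm (x' - x))\<^sup>2 + (norm (y' - y))\<^sup>2))"
      by (rule A3y) (use that in auto)
    also have "\<dots> = ennreal (Ly\<^sup>2 * (norm (x' - x))\<^sup>2) + ennreal (Ly\<^sup>2 * (norm (y' - y))\<^sup>2)"
      by (simp add: distrib_left ennreal_plus)
    finally show ?thesis .
  qed
  have linx: "(\<integral>\<^sup>+\<xi>. ennreal ((norm (gx x' y' \<xi> - gx x y \<xi>))\<^sup>2) \<partial>P) \<le> ennreal (2 * Lx\<^sup>2 * (norm (x' - x))\<^sup>2) + ennreal (2 * Ly\<^sup>2 * (norm (y' - y))\<^sup>2)"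
    if "x \<in> X" "x' \<in> X" "y \<in> Y" "y' \<in> Y" for x x' y y'
  proof -
    have pw: "(norm (a + b))\<^sup>2 \<le> 2 * (norm a)\<^sup>2 + 2 * (norm b)\<^sup>2" for a b :: 'x
    proof -
      have "(norm (a + b))\<^sup>2 \<le> (norm a + norm b)\<^sup>2" by (intro power_mono norm_triangle_ineq) simp
      also have "\<dots> \<le> 2 * (norm a)\<^sup>2 + 2 * (norm b)\<^sup>2" by (rule diff_ge_0_iff_ge[THEN iffD1]) (smt (verit) zero_le_power2 power2_diff power2_sum)
      finally show ?thesis .
    qed
    have ma: "(\<lambda>\<xi>. ennreal ((norm (gx x' y' \<xi> - gx x y' \<xi>))\<^sup>2)) \<in> borel_measurable P"
      using gx_P[of x' y'] gx_P[of x y'] by measurable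
    have mb: "(\<lambda>\<xi>. ennreal ((norm (gx x y' \<xi> - gx x y \<xi>))\<^sup>2)) \<in> borel_measurable P"
      using gx_P[of x y'] gx_P[of x y] by measurable
    have "(\<integral>\<^sup>+\<xi>. ennreal ((norm (gx x' y' \<xi> - gx x y \<xi>))\<^sup>2) \<partial>P)
        \<le> (\<integral>\<^sup>+\<xi>. ennreal 2 * ennreal ((norm (gx x' y' \<xi> - gx x y' \<xi>))\<^sup>2) + ennreal 2 * ennreal ((norm (gx x y' \<xi> - gx x y \<xi>))\<^sup>2) \<partial>P)"
    proof (rule nn_integral_mono)
      fix \<xi>
      define a where "a = (norm (gx x' y' \<xi> - gx x y \<xi>))\<^sup>2"
      define b where "b = (norm (gx x' y' \<xi> - gx x y' \<xi>))\<^sup>2"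
      define c where "c = (norm (gx x y' \<xi> - gx x y \<xi>))\<^sup>2"
      have h: "a \<le> 2 * b + 2 * c"
        using pw[of "gx x' y' \<xi> - gx x y' \<xi>" "gx x y' \<xi> - gx x y \<xi>"] by (simp add: a_def b_def c_def)
      have "ennreal a \<le> ennreal (2 * b + 2 * c)" using h by (rule ennreal_leI)
      also have "ennreal (2 * b + 2 * c) = ennreal 2 * ennreal b + ennreal 2 * ennreal c"
        by (simp add: ennreal_plus ennreal_mult b_def c_def)
      finally show "ennreal ((norm (gx x' y' \<xi> - gx x y \<xi>))\<^sup>2) \<le> ennreal 2 * ennreal ((norm (gx x' y' \<xi> - gx x y' \<xi>))\<^sup>2) + ennreal 2 * ennreal ((norm (gx x y' \<xi> - gx x y \<xi>))\<^sup>2)"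
        unfolding a_def b_def c_def .
    qed
    also have "\<dots> = ennreal 2 * (\<integral>\<^sup>+\<xi>. ennreal ((norm (gx x' y' \<xi> - gx x y' \<xi>))\<^sup>2) \<partial>P) + ennreal 2 * (\<integral>\<^sup>+\<xi>. ennreal ((norm (gx x y' \<xi> - gx x y \<xi>))\<^sup>2) \<partial>P)"
      using ma mb by (simp add: nn_integral_add nn_integral_cmult)
    also have "\<dots> \<le> ennreal 2 * ennreal (Lx\<^sup>2 * (norm (x' - x))\<^sup>2) + ennreal 2 * ennreal (Ly\<^sup>2 * (norm (y' - y))\<^sup>2)"
      by (intro add_mono mult_left_mono A3x A3xy) (use that in auto)
    also have "\<dots> = ennreal (2 * Lx\<^sup>2 * (norm (x' - x))\<^sup>2) + ennreal (2 * Ly\<^sup>2 * (norm (y' - y))\<^sup>2)"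
      by (simp add: ennreal_mult mult.assoc)
    finally show ?thesis .
  qed
  have Gyrec: "\<And>w k t. sGy (?A w k (Suc t)) = (1 / real M) *\<^sub>R (\<Sum>i<M. gy (sx (?A w k (Suc t))) (sy (?A w k (Suc t))) (w (k, Suc t, i))
       - gy (sx (?A w k t)) (sy (?A w k t)) (w (k, Suc t, i))) + sGy (?A w k t)"
    by (simp only: AA_Suc)
  have Gxrec: "\<And>w k t. sGx (?A w k (Suc t)) = (1 / real M) *\<^sub>R (\<Sum>i<M. gx (sx (?A w k (Suc t))) (sy (?A w k (Suc t))) (w (k, Suc t, i))
       - gx (sx (?A w k t)) (sy (?A w k t)) (w (k, Suc t, i))) + sGx (?A w k t)"
    by (simp only: AA_Suc)
  have settingy: "(\<not> online \<and> N > 0 \<and> P = empirical N data \<and> B = N \<and> Cy = 0) \<or> (online \<and> Cy = \<sigma>y\<^sup>2 / real B)"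
    using setting by auto
  have settingx: "(\<not> online \<and> N > 0 \<and> P = empirical N data \<and> B = N \<and> Cx = 0) \<or> (online \<and> Cx = \<sigma>x\<^sup>2 / real B)"
    using setting by auto
  have Ry: "(\<integral>\<^sup>+w. ennreal ((norm (sGy (?A w k \<tau>) - gFy (sx (?A w k \<tau>)) (sy (?A w k \<tau>))))\<^sup>2) \<partial>PiM UNIV (\<lambda>_. P))
    \<le> ennreal (Ly\<^sup>2 / real M) * (\<Sum>b<\<tau>. \<integral>\<^sup>+w. ennreal ((norm (sx (?A w k (Suc b)) - sx (?A w k b)))\<^sup>2) \<partial>PiM UNIV (\<lambda>_. P))
      + ennreal (Ly\<^sup>2 / real M) * (\<Sum>b<\<tau>. \<integral>\<^sup>+w. ennreal ((norm (sy (?A w k (Suc b)) - sy (?A w k b)))\<^sup>2) \<partial>PiM UNIV (\<lambda>_. P))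
      + ennreal Cy"
    by (rule err_bound[OF P gy_meas gyint gymean A5vy liny _ _ params(3,4) inXY sxm sym Gym Gyrec AA_0(2) settingy]) simp_all
  have Rx: "(\<integral>\<^sup>+w. ennreal ((norm (sGx (?A w k \<tau>) - gFx (sx (?A w k \<tau>)) (sy (?A w k \<tau>))))\<^sup>2) \<partial>PiM UNIV (\<lambda>_. P))
    \<le> ennreal (2 * Lx\<^sup>2 / real M) * (\<Sum>b<\<tau>. \<integral>\<^sup>+w. ennreal ((norm (sx (?A w k (Suc b)) - sx (?A w k b)))\<^sup>2) \<partial>PiM UNIV (\<lambda>_. P))
      + ennreal (2 * Ly\<^sup>2 / real M) * (\<Sum>b<\<tau>. \<integral>\<^sup>+w. ennreal ((norm (sy (?A w k (Suc b)) - sy (?A w k b)))\<^sup>2) \<partial>PiM UNIV (\<lambda>_. P))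
      + ennreal Cx"
    by (rule err_bound[OF P gx_meas gxint gxmean A5vx linx _ _ params(3,4) inXY sxm sym Gxm Gxrec AA_0(1) settingx]) simp_all
  show ?thesis unfolding iter Omega by (rule conjI[OF Ry Rx])
qed


end
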